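(* Consider particles indexed by $x\in[0,1]$ with trajectories $y(t,x)$ solving $\frac{d^2y}{dt^2}=F(y)$, $y(0,x)=x$, $\frac{dy}{dt}(0,x)=v(x)$, where $v$ is a $C^1$ function on $[0,1]$. Say there are no collisions if $y(t,x)\ne y(t,x')$ for all $t\ge0$ and all $x\ne x'$ in $[0,1]$. 1) (one gap) Let $F_1>0$, $F_2\ge0$, $A>1$, and $F(x)=F_1$ for $0\le x<A$, $F(x)=F_2$ for $x\ge A$. If $v(x)=0$ for all $x\in[0,1]$, then there are no collisions if and only if $F_2\ge F_1$. If $v(x)\ge0$ for all $x\in[0,1]$, then there are no collisions if and only if for all $x\in[0,1]$ both $$-2(A-x)v'(x)<v(x)+\sqrt{D(x)}\quad\text{and}\quad v'(x)\big((F_1-F_2)v(x)+F_2\sqrt{D(x)}\big)\ge F_1(F_1-F_2)$$ hold, where $D(x)=v^2(x)+2F_1(A-x)$. 2) (two gaps) Let $v(x)=0$ for all $x\in[0,1]$, let $0<F_2<F_1$, $F_2<F_3$, $1<A<B$, and $F(x)=F_1$ for $0\le x<A$, $F(x)=F_2$ for $x\in[A,B)$, $F(x)=F_3$ for $x\ge B$. Then there are no collisions if and only if $$B-A\le\alpha(A-1),\qquad \alpha=\frac{F_1(F_3-F_1)\big(F_3(F_1-F_2)+F_1(F_3-F_2)\big)}{(F_1-F_2)^2F_3^2}.$$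
   Context: One-dimensional continuum of non-interacting unit-mass point particles, each $x\in[0,1]$ starting at position $x$ with velocity $v(x)$ and moving under the piecewise constant external force $F$. *)

theory Defs
  imports "HOL-Analysis.Analysis"
begin

text \<open>A trajectory of a unit-mass particle under the (possibly discontinuous) force field F,
  starting at position x0 with velocity v0, for times t \<ge> 0, in the Caratheodory
  (integral) sense: y is differentiable on [0,\<infinity>) with derivative y', and
  y'(t) = v0 + integral over [0,t] of F(y(s)).\<close>
definition trajectory :: "(real \<Rightarrow> real) \<Rightarrow> real \<Rightarrow> real \<Rightarrow> (real \<Rightarrow> real) \<Rightarrow> bool" where
  "trajectory F x0 v0 y \<longleftrightarrow>
     (\<exists>y'. y 0 = x0 \<and> y' 0 = v0 \<and>
        (\<forall>t\<ge>0. (y has_real_derivative y' t) (at t within {0..})) \<and>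
        (\<forall>t\<ge>0. ((\<lambda>s. F (y s)) has_integral (y' t - v0)) {0..t}))"

definition no_collisions :: "(real \<Rightarrow> real) \<Rightarrow> (real \<Rightarrow> real) \<Rightarrow> bool" where
  "no_collisions F v \<longleftrightarrow>
     (\<forall>y :: real \<Rightarrow> real \<Rightarrow> real.
        (\<forall>x\<in>{0..1}. trajectory F x (v x) (\<lambda>t. y t x)) \<longrightarrow>
        (\<forall>t\<ge>0. \<forall>x\<in>{0..1}. \<forall>x'\<in>{0..1}. x \<noteq> x' \<longrightarrow> y t x \<noteq> y t x'))"

end

theory Submission
  imports Defs
begin

lemma traj_diff:
  fixes y y' F :: "real \<Rightarrow> real"
  assumes i: "\<forall>t\<ge>0. ((\<lambda>s. F (y s)) has_integral (y' t - v0)) {0..t}"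
    and st: "0 \<le> s" "s \<le> t"
  shows "((\<lambda>r. F (y r)) has_integral (y' t - y' s)) {s..t}"
proof -
  have it: "((\<lambda>s. F (y s)) has_integral (y' t - v0)) {0..t}" using i st by auto
  have is_: "((\<lambda>s. F (y s)) has_integral (y' s - v0)) {0..s}" using i st by auto
  have int: "(\<lambda>s. F (y s)) integrable_on {0..t}" using it by blast
  have int2: "(\<lambda>s. F (y s)) integrable_on {s..t}"
    using integrable_subinterval_real[OF int] st by auto
  have "integral {0..s} (\<lambda>s. F (y s)) + integral {s..t} (\<lambda>s. F (y s)) = integral {0..t} (\<lambda>s. F (y s))"
    using Henstock_Kurzweil_Integration.integral_combine[OF st int] .
  moreover have "integral {0..s} (\<lambda>s. F (y s)) = y' s - v0" using is_ by (rule integral_unique)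
  moreover have "integral {0..t} (\<lambda>s. F (y s)) = y' t - v0" using it by (rule integral_unique)
  ultimately have "integral {s..t} (\<lambda>s. F (y s)) = y' t - y' s" by simp
  with int2 show ?thesis using integrable_integral by metis
qed

lemma yprime_mono:
  fixes y y' :: "real \<Rightarrow> real"
  assumes i: "\<forall>t\<ge>0. ((\<lambda>s. F (y s)) has_integral (y' t - v0)) {0..t}"
    and F0: "\<forall>z. F z \<ge> 0"
    and st: "0 \<le> s" "s \<le> t"
  shows "y' s \<le> y' t"
proof -
  have "0 \<le> y' t - y' s"
    using has_integral_nonneg[OF traj_diff[of F y y' v0 s t, OF i st]] F0 by auto
  then show ?thesis by simp
qed

lemma y_mono:
  fixes y y' :: "real \<Rightarrow> real"
  assumes d: "\<forall>t\<ge>0. (y has_real_derivative y' t) (at t within {0..})"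
    and pos: "\<forall>r\<in>{s..t}. y' r \<ge> 0"
    and st: "0 \<le> s" "s \<le> t"
  shows "y s \<le> y t"
proof -
  have dd: "\<And>x. s \<le> x \<Longrightarrow> x \<le> t \<Longrightarrow> (y has_derivative (\<lambda>h. h * y' x)) (at x within {s..t})"
  proof -
    fix x assume "s \<le> x" "x \<le> t"
    then have x: "x \<in> {s..t}" by auto
    have "(y has_real_derivative y' x) (at x within {0..})" using d x st by auto
    then have "(y has_real_derivative y' x) (at x within {s..t})"
      by (rule has_field_derivative_subset) (use st in auto)
    then show "(y has_derivative (\<lambda>h. h * y' x)) (at x within {s..t})"
      by (simp add: has_field_derivative_def mult_commute_abs)
  qed
  obtain x where x: "x \<in> {s..t}" "y t - y s = (t - s) * y' x"
    using mvt_very_simple[OF st(2), of y "\<lambda>x h. h * y' x"] dd by auto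
  have "0 \<le> (t - s) * y' x" using x pos st by auto
  with x show ?thesis by simp
qed

lemma traj_const:
  fixes y y' :: "real \<Rightarrow> real"
  assumes d: "\<forall>t\<ge>0. (y has_real_derivative y' t) (at t within {0..})"
    and i: "\<forall>t\<ge>0. ((\<lambda>s. F (y s)) has_integral (y' t - v0)) {0..t}"
    and t0: "0 \<le> t0" "t0 \<le> t1"
    and c: "\<forall>s\<in>{t0..<t1}. F (y s) = c"
  shows "\<forall>t\<in>{t0..t1}. y' t = y' t0 + c * (t - t0) \<and>
           y t = y t0 + y' t0 * (t - t0) + c * (t - t0)^2 / 2"
proof -
  have vel: "y' t = y' t0 + c * (t - t0)" if t: "t \<in> {t0..t1}" for t
  proof -
    have h1: "((\<lambda>r. F (y r)) has_integral (y' t - y' t0)) {t0..t}"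
      using traj_diff[of F y y' v0 t0 t, OF i] t t0 by auto
    have h2: "((\<lambda>r. c) has_integral (c * (t - t0))) {t0..t}"
      using has_integral_const_real[of c t0 t] t by (simp add: mult.commute)
    have h3: "((\<lambda>r. F (y r)) has_integral (c * (t - t0))) {t0..t}"
      by (rule has_integral_spike_finite[of "{t1}", OF _ _ h2]) (use c t in auto)
    show ?thesis using has_integral_unique[OF h1 h3] by simp
  qed
  define g where "g t = y t - (y t0 + y' t0 * (t - t0) + c * (t - t0)^2 / 2)" for t
  have gd: "(g has_derivative (\<lambda>h. 0)) (at x within {t0..t1})" if x: "x \<in> {t0..t1}" for x
  proof -
    have "(y has_real_derivative y' x) (at x within {0..})" using d x t0 by auto
    then have yd: "(y has_real_derivative y' x) (at x within {t0..t1})"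
      by (rule has_field_derivative_subset) (use t0 in auto)
    have "(g has_real_derivative (y' x - (y' t0 + c * (x - t0)))) (at x within {t0..t1})"
      unfolding g_def
      by (rule derivative_eq_intros yd refl | simp)+
    then have "(g has_real_derivative 0) (at x within {t0..t1})" using vel[OF x] by simp
    moreover have "((*) (0::real)) = (\<lambda>h. 0)" by auto
    ultimately show ?thesis by (simp add: has_field_derivative_def)
  qed
  show ?thesis
  proof
    fix t assume t: "t \<in> {t0..t1}"
    have "g t = g t0"
      by (rule has_derivative_zero_unique[of "{t0..t1}" g]) (use gd t t0 in auto)
    then show "y' t = y' t0 + c * (t - t0) \<and> y t = y t0 + y' t0 * (t - t0) + c * (t - t0)^2 / 2"
      using vel[OF t] by (simp add: g_def)
  qed
qed

lemma y_cont:
  fixes y y' :: "real \<Rightarrow> real"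
  assumes d: "\<forall>t\<ge>0. (y has_real_derivative y' t) (at t within {0..})"
    and S: "S \<subseteq> {0..}"
  shows "continuous_on S y"
proof -
  have "continuous (at x within S) y" if "x \<in> S" for x
  proof -
    have "(y has_real_derivative y' x) (at x within {0..})" using d that S by auto
    then have "(y has_real_derivative y' x) (at x within S)"
      by (rule has_field_derivative_subset) (use S in auto)
    then show ?thesis by (rule DERIV_continuous)
  qed
  then show ?thesis by (simp add: continuous_on_eq_continuous_within)
qed

lemma traj_reach:
  fixes y y' F :: "real \<Rightarrow> real"
  assumes d: "\<forall>t\<ge>0. (y has_real_derivative y' t) (at t within {0..})"
    and i: "\<forall>t\<ge>0. ((\<lambda>s. F (y s)) has_integral (y' t - v0)) {0..t}"
    and F0: "\<forall>z. F z \<ge> 0"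
    and t0: "0 \<le> t0" and yt0: "y t0 = p" and wt0: "y' t0 = w" and w0: "0 \<le> w"
    and Fc: "\<And>z. p \<le> z \<Longrightarrow> z < a \<Longrightarrow> F z = c"
    and tau: "0 < \<tau>" and hit: "p + w * \<tau> + c * \<tau>^2 / 2 = a"
    and below: "\<And>s. 0 \<le> s \<Longrightarrow> s < \<tau> \<Longrightarrow> p + w * s + c * s^2 / 2 < a"
  shows "\<forall>t\<in>{t0..t0+\<tau>}. y' t = w + c * (t - t0) \<and> y t = p + w * (t - t0) + c * (t - t0)^2 / 2"
    and "\<forall>t\<ge>t0+\<tau>. a \<le> y t"
proof -
  have ypos: "0 \<le> y' t" if "t0 \<le> t" for t
    using yprime_mono[of F y y' v0 t0 t, OF i F0 t0 that] wt0 w0 by simp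
  have yge: "p \<le> y t" if "t0 \<le> t" for t
  proof -
    have "\<forall>r\<in>{t0..t}. 0 \<le> y' r" using ypos by simp
    from y_mono[where y=y and y'=y', OF d this t0 that] show ?thesis using yt0 by simp
  qed
  have lt: "y t < a" if t: "t0 \<le> t" "t < t0 + \<tau>" for t
  proof (rule ccontr)
    assume "\<not> y t < a"
    then have ya: "a \<le> y t" by simp
    define S where "S = {t0..t} \<inter> y -` {a..}"
    have cy: "continuous_on {t0..t} y" using y_cont[OF d, of "{t0..t}"] t0 by auto
    have cl: "closed S" unfolding S_def
      by (rule continuous_closed_preimage[OF cy]) auto
    have ne: "S \<noteq> {}" using ya t unfolding S_def by auto
    have bb: "bdd_below S" unfolding S_def by (rule bdd_belowI[of _ t0]) auto
    define m where "m = Inf S"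
    have mS: "m \<in> S" unfolding m_def using closed_contains_Inf[OF ne bb cl] .
    then have m: "t0 \<le> m" "m \<le> t" "a \<le> y m" unfolding S_def by auto
    have before: "y s < a" if s: "s \<in> {t0..<m}" for s
    proof (rule ccontr)
      assume "\<not> y s < a"
      then have "s \<in> S" using s m unfolding S_def by auto
      then have "m \<le> s" unfolding m_def using bb by (rule cInf_lower)
      with s show False by auto
    qed
    have cF: "\<forall>s\<in>{t0..<m}. F (y s) = c"
    proof
      fix s assume s: "s \<in> {t0..<m}"
      have "t0 \<le> s" using s by auto
      then show "F (y s) = c" using Fc yge before[OF s] by blast
    qed
    have "\<forall>t\<in>{t0..m}. y' t = y' t0 + c * (t - t0) \<and> y t = y t0 + y' t0 * (t - t0) + c * (t - t0)^2 / 2"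
      by (rule traj_const[where F=F and y=y and y'=y', OF d i t0 m(1) cF])
    moreover have "m \<in> {t0..m}" using m(1) by simp
    ultimately have "y m = y t0 + y' t0 * (m - t0) + c * (m - t0)^2 / 2" by blast
    also have "\<dots> = p + w * (m - t0) + c * (m - t0)^2 / 2" using yt0 wt0 by simp
    also have "\<dots> < a" by (rule below) (use m t in linarith)+
    finally show False using m(3) by linarith
  qed
  have cF: "\<forall>s\<in>{t0..<t0+\<tau>}. F (y s) = c"
  proof
    fix s assume s: "s \<in> {t0..<t0+\<tau>}"
    have "t0 \<le> s" "s < t0 + \<tau>" using s by auto
    then show "F (y s) = c" using Fc yge lt by blast
  qed
  have A0: "\<forall>t\<in>{t0..t0+\<tau>}. y' t = y' t0 + c * (t - t0) \<and> y t = y t0 + y' t0 * (t - t0) + c * (t - t0)^2 / 2"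
    by (rule traj_const[where F=F and y=y and y'=y', OF d i t0 _ cF]) (use tau in linarith)
  then show A: "\<forall>t\<in>{t0..t0+\<tau>}. y' t = w + c * (t - t0) \<and> y t = p + w * (t - t0) + c * (t - t0)^2 / 2"
    unfolding yt0 wt0 .
  have "t0 + \<tau> \<in> {t0..t0+\<tau>}" using tau by auto
  from bspec[OF A this] have ya: "y (t0 + \<tau>) = a" using hit by simp
  show "\<forall>t\<ge>t0+\<tau>. a \<le> y t"
  proof safe
    fix t assume tt: "t0 + \<tau> \<le> t"
    have "\<forall>r\<in>{t0+\<tau>..t}. 0 \<le> y' r" using ypos tau by simp
    from y_mono[where y=y and y'=y', OF d this _ tt] show "a \<le> y t" using ya t0 tau by simp
  qed
qed

lemma traj_after:
  fixes y y' F :: "real \<Rightarrow> real"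
  assumes d: "\<forall>t\<ge>0. (y has_real_derivative y' t) (at t within {0..})"
    and i: "\<forall>t\<ge>0. ((\<lambda>s. F (y s)) has_integral (y' t - v0)) {0..t}"
    and t0: "0 \<le> t0" and ge: "\<forall>t\<ge>t0. a \<le> y t"
    and Fc: "\<forall>z\<ge>a. F z = c"
  shows "\<forall>t\<ge>t0. y t = y t0 + y' t0 * (t - t0) + c * (t - t0)^2 / 2"
proof safe
  fix t assume t: "t0 \<le> t"
  have cF: "\<forall>s\<in>{t0..<t}. F (y s) = c"
  proof
    fix s assume "s \<in> {t0..<t}"
    then have "a \<le> y s" using ge by simp
    then show "F (y s) = c" using Fc by simp
  qed
  have "\<forall>s\<in>{t0..t}. y' s = y' t0 + c * (s - t0) \<and> y s = y t0 + y' t0 * (s - t0) + c * (s - t0)^2 / 2"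
    by (rule traj_const[where F=F and y=y and y'=y', OF d i t0 t cF])
  moreover have "t \<in> {t0..t}" using t by simp
  ultimately show "y t = y t0 + y' t0 * (t - t0) + c * (t - t0)^2 / 2" by blast
qed

definition Q :: "real \<Rightarrow> real" where "Q u = (max u 0)^2"

lemma Q_deriv: "(Q has_real_derivative (2 * max u 0)) (at u)"
proof (cases "u > 0")
  case True
  have "((\<lambda>z. z^2) has_real_derivative (2 * u)) (at u)"
    by (rule derivative_eq_intros refl | simp)+
  then have "(Q has_real_derivative (2 * u)) (at u)"
    by (rule has_field_derivative_transform_within_open[of _ _ _ "{0<..}"]) (use True in \<open>auto simp: Q_def\<close>)
  then show ?thesis using True by simp
next
  case False
  show ?thesis
  proof (cases "u < 0")
    case True
    have "((\<lambda>z. 0) has_real_derivative 0) (at u)" by simp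
    then have "(Q has_real_derivative 0) (at u)"
      by (rule has_field_derivative_transform_within_open[of _ _ _ "{..<0}"]) (use True in \<open>auto simp: Q_def\<close>)
    then show ?thesis using True by simp
  next
    case False
    then have u: "u = 0" using \<open>\<not> u > 0\<close> by simp
    have "((\<lambda>y. (Q y - Q 0) / (y - 0)) \<longlongrightarrow> 0) (at 0)"
    proof (rule Lim_null_comparison[where g=abs])
      show "\<forall>\<^sub>F y in at 0. norm ((Q y - Q 0) / (y - 0)) \<le> \<bar>y\<bar>"
      proof (rule always_eventually, rule allI)
        fix y :: real
        show "norm ((Q y - Q 0) / (y - 0)) \<le> \<bar>y\<bar>"
        proof (cases "y > 0")
          case True then show ?thesis by (simp add: Q_def power2_eq_square)
        next
          case False then show ?thesis by (simp add: Q_def)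
        qed
      qed
      show "(abs \<longlongrightarrow> 0) (at (0::real))"
        using tendsto_rabs[OF tendsto_ident_at[of "0::real" UNIV]] by simp
    qed
    then show ?thesis using u by (simp add: has_field_derivative_iff)
  qed
qed

lemma step_integral:
  fixes T t :: real
  assumes T: "0 \<le> T" and t: "0 \<le> t"
  shows "((\<lambda>s. if T \<le> s then 1 else 0) has_integral (max (t - T) 0)) {0..t}"
proof (cases "t \<le> T")
  case True
  have z: "((\<lambda>s. 0::real) has_integral 0) {0..t}" by simp
  have "((\<lambda>s. if T \<le> s then 1 else 0::real) has_integral 0) {0..t}"
    by (rule has_integral_spike_finite[of "{T}", OF _ _ z]) (use True in auto)
  then show ?thesis using True by simp
next
  case False
  have a: "((\<lambda>s. if T \<le> s then 1 else 0::real) has_integral 0) {0..T}"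
    by (rule has_integral_spike_finite[of "{T}", OF _ _ has_integral_0]) auto
  have "((\<lambda>s. 1::real) has_integral (t - T)) {T..t}"
    using has_integral_const_real[of "1::real" T t] False by simp
  then have b: "((\<lambda>s. if T \<le> s then 1 else 0::real) has_integral (t - T)) {T..t}"
    by (rule has_integral_eq[rotated]) auto
  from has_integral_combine[OF T _ a b] False show ?thesis by simp
qed

lemma traj_exist:
  fixes Y Y' F :: "real \<Rightarrow> real"
  assumes "\<forall>t\<ge>0. (Y has_real_derivative Y' t) (at t)" "Y 0 = x0" "Y' 0 = v0"
    "\<forall>t\<ge>0. ((\<lambda>s. F (Y s)) has_integral (Y' t - v0)) {0..t}"
  shows "trajectory F x0 v0 Y"
  unfolding trajectory_def
  using assms by (intro exI[of _ Y']) (auto intro: has_field_derivative_at_within)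

lemma incr_lemma:
  fixes f f' :: "real \<Rightarrow> real"
  assumes cont: "continuous_on {a..b} f" and fin: "finite S"
    and der: "\<And>x. x \<in> {a<..<b} - S \<Longrightarrow> (f has_real_derivative f' x) (at x)"
    and pos: "\<And>x. x \<in> {a..b} \<Longrightarrow> 0 < f' x"
    and x: "a \<le> x1" "x1 < x2" "x2 \<le> b"
  shows "f x1 < f x2"
proof -
  have mono: "f p \<le> f q" if pq: "a \<le> p" "p \<le> q" "q \<le> b" for p q
  proof -
    have "(f' has_integral f q - f p) {p..q}"
    proof (rule fundamental_theorem_of_calculus_interior_strong[OF fin pq(2)])
      show "continuous_on {p..q} f" by (rule continuous_on_subset[OF cont]) (use pq in auto)
      fix x assume "x \<in> {p<..<q} - S"
      then have "x \<in> {a<..<b} - S" using pq by auto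
      from der[OF this] show "(f has_vector_derivative f' x) (at x)"
        by (simp add: has_real_derivative_iff_has_vector_derivative)
    qed
    moreover have "\<And>x. x \<in> {p..q} \<Longrightarrow> 0 \<le> f' x" using pos pq by (simp add: less_imp_le)
    ultimately have "0 \<le> f q - f p" by (rule has_integral_nonneg)
    then show ?thesis by simp
  qed
  have "infinite ({x1<..<x2} - S)" using Diff_infinite_finite[OF fin infinite_Ioo[OF x(2)]] .
  then obtain z where z: "z \<in> {x1<..<x2} - S" using infinite_imp_nonempty by blast
  then have "z \<in> {a<..<b} - S" using x by auto
  from DERIV_pos_inc_right[OF der[OF this] pos] z x obtain d where d: "d > 0" "\<And>h. h > 0 \<Longrightarrow> h < d \<Longrightarrow> f z < f (z + h)"
    by force
  define h where "h = min (d/2) ((x2 - z)/2)"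
  have hh: "h \<le> d/2" "h \<le> (x2 - z)/2" "h > 0" unfolding h_def using d(1) z by (auto simp: min_def)
  have h: "h > 0" "h < d" "z + h \<le> x2" using hh d z by auto
  have "f x1 \<le> f z" by (rule mono) (use z x in auto)
  also have "\<dots> < f (z + h)" using d h by auto
  also have "\<dots> \<le> f x2" by (rule mono) (use z x h in auto)
  finally show ?thesis .
qed

lemma coll_lemma:
  fixes Y :: "real \<Rightarrow> real \<Rightarrow> real"
  assumes t: "0 \<le> t"
    and gc: "continuous_on {0..t} (\<lambda>\<tau>. Y 1 \<tau> - Y 0 \<tau>)"
    and Y00: "Y 0 0 = 0" and Y10: "Y 1 0 = 1"
    and fc: "continuous_on {0..1} (\<lambda>x. Y x t)"
    and x0: "x0 \<in> {0..1}"
    and fd: "((\<lambda>x. Y x t) has_real_derivative d) (at x0 within {0..1})" and dneg: "d < 0"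
  shows "\<exists>\<tau>\<ge>0. \<exists>x\<in>{0..1}. \<exists>x'\<in>{0..1}. x \<noteq> x' \<and> Y x \<tau> = Y x' \<tau>"
proof (cases "Y 1 t - Y 0 t \<le> 0")
  case True
  have "\<exists>\<tau>\<ge>0. \<tau> \<le> t \<and> Y 1 \<tau> - Y 0 \<tau> = 0"
    by (rule IVT2'[of "\<lambda>\<tau>. Y 1 \<tau> - Y 0 \<tau>", OF True _ t gc]) (use Y00 Y10 in simp)
  then obtain \<tau> where "\<tau> \<ge> 0" "Y 1 \<tau> = Y 0 \<tau>" by auto
  then show ?thesis by (intro exI[of _ \<tau>]) force
next
  case False
  define f where "f x = Y x t" for x
  have f10: "f 0 < f 1" using False unfolding f_def by simp
  have fd': "(f has_real_derivative d) (at x0 within {0..1})" using fd unfolding f_def .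
  have "\<exists>p q. 0 \<le> p \<and> p < q \<and> q \<le> 1 \<and> f q < f p"
  proof (cases "x0 < 1")
    case True
    from has_real_derivative_neg_dec_right[OF fd' dneg] obtain e where
      e: "e > 0" "\<And>h. h > 0 \<Longrightarrow> x0 + h \<in> {0..1} \<Longrightarrow> h < e \<Longrightarrow> f (x0 + h) < f x0" by blast
    define h where "h = min (e/2) ((1 - x0)/2)"
    have hh: "h \<le> e/2" "h \<le> (1 - x0)/2" "h > 0" unfolding h_def using e(1) True by (auto simp: min_def)
    have h: "h > 0" "h < e" "x0 + h \<in> {0..1}" using hh e x0 by auto
    show ?thesis using e(2)[OF h(1) h(3) h(2)] h x0 by (intro exI[of _ x0] exI[of _ "x0 + h"]) auto
  next
    case False
    then have x1: "x0 = 1" using x0 by auto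
    from has_real_derivative_neg_dec_left[OF fd' dneg] obtain e where
      e: "e > 0" "\<And>h. h > 0 \<Longrightarrow> x0 - h \<in> {0..1} \<Longrightarrow> h < e \<Longrightarrow> f x0 < f (x0 - h)" by blast
    define h where "h = min (e/2) (1/2)"
    have hh: "h \<le> e/2" "h \<le> 1/2" "h > 0" unfolding h_def using e(1) by auto
    have h: "h > 0" "h < e" "x0 - h \<in> {0..1}" using hh e x1 by auto
    show ?thesis using e(2)[OF h(1) h(3) h(2)] h x1 by (intro exI[of _ "x0 - h"] exI[of _ x0]) auto
  qed
  then obtain p q where pq: "0 \<le> p" "p < q" "q \<le> 1" "f q < f p" by blast
  define g where "g s = f ((1 - s) + s * q) - f (s * p)" for s
  have inI: "(1 - s) + s * q \<in> {0..1}" "s * p \<in> {0..1}" if "s \<in> {0..1}" for s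
  proof -
    have "s * q \<le> s * 1" using that pq by (intro mult_left_mono) auto
    moreover have "0 \<le> s * q" using that pq by auto
    moreover have "s * p \<le> s * 1" using that pq by (intro mult_left_mono) auto
    moreover have "0 \<le> s * p" using that pq by auto
    ultimately show "(1 - s) + s * q \<in> {0..1}" "s * p \<in> {0..1}" using that by auto
  qed
  have fc': "continuous_on {0..1} f" using fc unfolding f_def .
  have gc': "continuous_on {0..1} g"
  proof -
    have i1: "(\<lambda>s. (1 - s) + s * q) ` {0..1} \<subseteq> {0..1}" using inI(1) by blast
    have i2: "(\<lambda>s. s * p) ` {0..1} \<subseteq> {0..1}" using inI(2) by blast
    have c1: "continuous_on {0..1} (\<lambda>s. f ((1 - s) + s * q))"
      by (rule continuous_on_compose2[OF fc' _ i1]) (intro continuous_intros)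
    have c2: "continuous_on {0..1} (\<lambda>s. f (s * p))"
      by (rule continuous_on_compose2[OF fc' _ i2]) (intro continuous_intros)
    show ?thesis unfolding g_def by (intro continuous_intros c1 c2)
  qed
  have "g 1 \<le> 0" "0 \<le> g 0" using pq f10 unfolding g_def by auto
  from IVT2'[of g, OF this(1) this(2) _ gc'] obtain s where s: "0 \<le> s" "s \<le> 1" "g s = 0" by auto
  have ne: "(1 - s) + s * q \<noteq> s * p"
  proof -
    have "s * p \<le> s * q" using s pq by (intro mult_left_mono) auto
    moreover have "s * p < s * q \<or> s = 0" using s pq by auto
    ultimately show ?thesis using s by auto
  qed
  show ?thesis
    using s ne inI[of s] unfolding g_def f_def
    by (intro exI[of _ t]) (use t in force)
qed

lemma Q_cont: "continuous_on S (\<lambda>x. Q (f x))" if "continuous_on S f" for S f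
  unfolding Q_def by (intro continuous_intros that)

lemma Q_neg: "u \<le> 0 \<Longrightarrow> Q u = 0" by (simp add: Q_def)
lemma Q_pos: "u \<ge> 0 \<Longrightarrow> Q u = u^2" by (simp add: Q_def)

lemma Q_shift_deriv: "((\<lambda>t. Q (t - c)) has_real_derivative (2 * max (t - c) 0)) (at t within S)"
proof -
  have "((\<lambda>t. t - c) has_real_derivative 1) (at t within S)"
    by (rule derivative_eq_intros refl | simp)+
  from DERIV_chain2[OF Q_deriv this] show ?thesis by simp
qed

locale P1 =
  fixes F1 F2 A :: real and v v' :: "real \<Rightarrow> real"
  assumes F1: "F1 > 0" and F2: "F2 \<ge> 0" and A: "A > 1"
    and vd: "\<forall>x\<in>{0..1}. (v has_real_derivative v' x) (at x within {0..1})"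
    and v'c: "continuous_on {0..1} v'"
    and vpos: "\<forall>x\<in>{0..1}. v x \<ge> 0"
begin

lemma F1ne[simp]: "F1 \<noteq> 0" using F1 by simp

definition "w x = sqrt ((v x)^2 + 2 * F1 * (A - x))"
definition "T x = (w x - v x) / F1"
definition "J x = 1 + v' x * T x"
definition "Tp x = - J x / w x"
definition "K x = v' x + (F1 - F2) * Tp x"
definition "Y x t = x + v x * t + F1 * t^2 / 2 + (F2 - F1) / 2 * Q (t - T x)"
definition "Yd x t = v x + F1 * t + (F2 - F1) * max (t - T x) 0"
definition "Fo z = (if z < A then F1 else F2)"

lemma basic:
  assumes x: "x \<in> {0..1}"
  shows "w x > 0" "w x > v x" "(w x)^2 = (v x)^2 + 2 * F1 * (A - x)" "T x > 0"
    "x + v x * T x + F1 * (T x)^2 / 2 = A" "v x + F1 * T x = w x"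
    "\<And>s. 0 \<le> s \<Longrightarrow> s < T x \<Longrightarrow> x + v x * s + F1 * s^2 / 2 < A"
proof -
  have Ax: "A - x > 0" using x A by auto
  have D: "(v x)^2 + 2 * F1 * (A - x) > 0" using Ax F1 by (simp add: add_nonneg_pos)
  show w0: "w x > 0" unfolding w_def using D by simp
  show w2: "(w x)^2 = (v x)^2 + 2 * F1 * (A - x)" unfolding w_def using D by simp
  have vx: "v x \<ge> 0" using vpos x by auto
  have "(v x)^2 < (w x)^2" using w2 Ax F1 by simp
  from power_less_imp_less_base[OF this] show wv: "w x > v x" using w0 by simp
  show "T x > 0" unfolding T_def using wv F1 by simp
  show sw: "v x + F1 * T x = w x" unfolding T_def using F1 by simp
  show hit: "x + v x * T x + F1 * (T x)^2 / 2 = A"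
  proof -
    have "v x * T x + F1 * (T x)^2 / 2 = ((w x)^2 - (v x)^2) / (2 * F1)"
      unfolding T_def using F1 by (simp add: field_simps power2_eq_square)
    also have "\<dots> = A - x" using w2 F1 by simp
    finally show ?thesis by simp
  qed
  fix s assume s: "0 \<le> s" "s < T x"
  have "v x * s \<le> v x * T x" using vx s by (intro mult_left_mono) auto
  moreover have "s^2 < (T x)^2" using s by (intro power_strict_mono) auto
  then have "F1 * s^2 < F1 * (T x)^2" using F1 by simp
  ultimately show "x + v x * s + F1 * s^2 / 2 < A" using hit by linarith
qed

lemma Y_pre: "x \<in> {0..1} \<Longrightarrow> t \<le> T x \<Longrightarrow> Y x t = x + v x * t + F1 * t^2 / 2"
  unfolding Y_def by (simp add: Q_neg)

lemma Y_post: assumes x: "x \<in> {0..1}" and t: "T x \<le> t"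
  shows "Y x t = A + w x * (t - T x) + F2 * (t - T x)^2 / 2"
proof -
  note b = basic[OF x]
  have "Y x t = x + v x * t + F1 * t^2 / 2 + (F2 - F1) / 2 * (t - T x)^2"
    unfolding Y_def using t by (simp add: Q_pos)
  also have "\<dots> = (x + v x * T x + F1 * (T x)^2 / 2) + (v x + F1 * T x) * (t - T x) + F2 * (t - T x)^2 / 2"
    by (simp add: field_simps power2_eq_square)
  also have "\<dots> = A + w x * (t - T x) + F2 * (t - T x)^2 / 2" using b(5,6) by simp
  finally show ?thesis .
qed

lemma Fo_nonneg: "Fo z \<ge> 0" unfolding Fo_def using F1 F2 by auto

lemma traj_Y: assumes x: "x \<in> {0..1}" shows "trajectory Fo x (v x) (Y x)"
proof (rule traj_exist[where Y'="Yd x"])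
  note b = basic[OF x]
  show "\<forall>t\<ge>0. (Y x has_real_derivative Yd x t) (at t)"
  proof safe
    fix t :: real
    show "(Y x has_real_derivative Yd x t) (at t)"
      unfolding Y_def[abs_def] Yd_def
      by (rule derivative_eq_intros Q_shift_deriv refl | simp)+
  qed
  show "Y x 0 = x" unfolding Y_def using b(4) by (simp add: Q_neg)
  show "Yd x 0 = v x" unfolding Yd_def using b(4) by simp
  show "\<forall>t\<ge>0. ((\<lambda>s. Fo (Y x s)) has_integral (Yd x t - v x)) {0..t}"
  proof safe
    fix t :: real assume t: "0 \<le> t"
    have i1: "((\<lambda>s. F1) has_integral (F1 * t)) {0..t}"
      using has_integral_const_real[of F1 0 t] t by (simp add: mult.commute)
    have i2: "((\<lambda>s. (F2 - F1) * (if T x \<le> s then 1 else 0)) has_integral ((F2 - F1) * max (t - T x) 0)) {0..t}"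
      by (rule has_integral_mult_right[OF step_integral]) (use b(4) t in auto)
    have i3: "((\<lambda>s. F1 + (F2 - F1) * (if T x \<le> s then 1 else 0)) has_integral (Yd x t - v x)) {0..t}"
      using has_integral_add[OF i1 i2] unfolding Yd_def by simp
    show "((\<lambda>s. Fo (Y x s)) has_integral (Yd x t - v x)) {0..t}"
    proof (rule has_integral_eq[OF _ i3])
      fix s assume s: "s \<in> {0..t}"
      show "F1 + (F2 - F1) * (if T x \<le> s then 1 else 0) = Fo (Y x s)"
      proof (cases "s < T x")
        case True
        then have "Y x s < A" using Y_pre[OF x, of s] b(7)[of s] s by auto
        then show ?thesis using True unfolding Fo_def by simp
      next
        case False
        have "0 \<le> w x * (s - T x)" using b(1) False by simp
        moreover have "0 \<le> F2 * (s - T x)^2 / 2" using F2 by simp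
        ultimately have "A \<le> Y x s" using Y_post[OF x, of s] False by simp
        then show ?thesis using False unfolding Fo_def by simp
      qed
    qed
  qed
qed

lemma traj_unique:
  assumes x: "x \<in> {0..1}" and tr: "trajectory Fo x (v x) y" and t: "0 \<le> t"
  shows "y t = Y x t"
proof -
  note b = basic[OF x]
  obtain y' where y0: "y 0 = x" and y'0: "y' 0 = v x"
    and d: "\<forall>t\<ge>0. (y has_real_derivative y' t) (at t within {0..})"
    and i: "\<forall>t\<ge>0. ((\<lambda>s. Fo (y s)) has_integral (y' t - v x)) {0..t}"
    using tr unfolding trajectory_def by blast
  have F0: "\<forall>z. Fo z \<ge> 0" using Fo_nonneg by auto
  have Fc: "\<And>z. x \<le> z \<Longrightarrow> z < A \<Longrightarrow> Fo z = F1" unfolding Fo_def by simp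
  have r1: "\<forall>t\<in>{0..0+T x}. y' t = v x + F1 * (t - 0) \<and> y t = x + v x * (t - 0) + F1 * (t - 0)^2 / 2"
    and r2: "\<forall>t\<ge>0+T x. A \<le> y t"
    using traj_reach[where y=y and y'=y' and F=Fo, OF d i F0 order_refl y0 y'0 _ Fc b(4) _ b(7)]
      vpos x b(5) by auto
  have yT: "y (T x) = A" "y' (T x) = w x" using r1 b(4,5,6) by auto
  have Fc2: "\<forall>z\<ge>A. Fo z = F2" unfolding Fo_def by simp
  have r3: "\<forall>t\<ge>T x. y t = y (T x) + y' (T x) * (t - T x) + F2 * (t - T x)^2 / 2"
    using traj_after[where y=y and y'=y' and F=Fo, OF d i _ _ Fc2] b(4) r2 by auto
  show ?thesis
  proof (cases "t \<le> T x")
    case True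
    then show ?thesis using r1 t Y_pre[OF x True] by auto
  next
    case False
    then show ?thesis using r3 yT Y_post[OF x, of t] by auto
  qed
qed


lemma v_cont: "continuous_on {0..1} v"
proof -
  have "continuous (at x within {0..1}) v" if "x \<in> {0..1}" for x
    using DERIV_continuous[OF vd[rule_format, OF that]] .
  then show ?thesis by (simp add: continuous_on_eq_continuous_within)
qed

lemma w_deriv: assumes x: "x \<in> {0..1}"
  shows "(w has_real_derivative ((v x * v' x - F1) / w x)) (at x within {0..1})"
proof -
  note b = basic[OF x]
  have Dpos: "(v x)^2 + 2 * F1 * (A - x) > 0" using b(1,3) by (metis zero_less_power2 less_irrefl)
  have dD: "((\<lambda>x. (v x)^2 + 2 * F1 * (A - x)) has_real_derivative (2 * v x * v' x - 2 * F1)) (at x within {0..1})"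
    by (rule derivative_eq_intros vd[rule_format, OF x] refl | simp)+
  have "((\<lambda>x. sqrt ((v x)^2 + 2 * F1 * (A - x))) has_real_derivative
          (inverse (sqrt ((v x)^2 + 2 * F1 * (A - x))) / 2) * (2 * v x * v' x - 2 * F1)) (at x within {0..1})"
    by (rule DERIV_chain2[OF DERIV_real_sqrt[OF Dpos] dD])
  then have d: "(w has_real_derivative (inverse (w x) / 2) * (2 * v x * v' x - 2 * F1)) (at x within {0..1})"
    unfolding w_def[abs_def] .
  have eq: "(inverse (w x) / 2) * (2 * v x * v' x - 2 * F1) = (v x * v' x - F1) / w x"
    using b(1) by (simp add: field_simps)
  show ?thesis using d unfolding eq .
qed

lemma Tp_eq: assumes x: "x \<in> {0..1}"
  shows "((v x * v' x - F1) / w x - v' x) / F1 = Tp x"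
proof -
  note b = basic[OF x]
  have "w x \<noteq> 0" using b(1) by simp
  then show ?thesis unfolding Tp_def J_def T_def using F1 by (simp add: field_simps)
qed

lemma T_deriv: assumes x: "x \<in> {0..1}"
  shows "(T has_real_derivative Tp x) (at x within {0..1})"
proof -
  have "((\<lambda>x. (w x - v x) / F1) has_real_derivative (((v x * v' x - F1) / w x - v' x) / F1)) (at x within {0..1})"
    by (rule derivative_eq_intros w_deriv[OF x] vd[rule_format, OF x] refl | simp)+
  then show ?thesis unfolding T_def[abs_def] Tp_eq[OF x] .
qed

lemma cont_of_deriv:
  assumes "\<And>x. x \<in> {0..1} \<Longrightarrow> (f has_real_derivative f' x) (at x within {0..1::real})"
  shows "continuous_on {0..1} f"
proof -
  have "continuous (at x within {0..1}) f" if "x \<in> {0..1}" for x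
    using DERIV_continuous[OF assms[OF that]] .
  then show ?thesis by (simp add: continuous_on_eq_continuous_within)
qed

lemma T_cont: "continuous_on {0..1} T" using cont_of_deriv[OF T_deriv] .

lemma G_deriv: assumes x: "x \<in> {0..1}"
  shows "((\<lambda>x. A + w x * (t - T x) + F2 * (t - T x)^2 / 2) has_real_derivative (J x + (t - T x) * K x)) (at x within {0..1})"
proof -
  note b = basic[OF x]
  have d: "((\<lambda>x. A + w x * (t - T x) + F2 * (t - T x)^2 / 2) has_real_derivative
      ((v x * v' x - F1) / w x * (t - T x) + w x * (- Tp x) + F2 * (t - T x) * (- Tp x))) (at x within {0..1})"
    by (rule derivative_eq_intros w_deriv[OF x] T_deriv[OF x] refl | simp)+
  have h1: "(v x * v' x - F1) / w x = v' x + F1 * Tp x"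
    using Tp_eq[OF x] F1 by (simp add: field_simps)
  have h2: "w x * Tp x = - J x" unfolding Tp_def using b(1) by simp
  have eq: "(v x * v' x - F1) / w x * (t - T x) + w x * (- Tp x) + F2 * (t - T x) * (- Tp x)
     = J x + (t - T x) * K x"
    unfolding h1 K_def using h2 by (simp add: algebra_simps)
  show ?thesis using d unfolding eq .
qed

lemma P_deriv: assumes x: "x \<in> {0..1}"
  shows "((\<lambda>x. x + v x * t + F1 * t^2 / 2) has_real_derivative (1 + v' x * t)) (at x within {0..1})"
  by (rule derivative_eq_intros vd[rule_format, OF x] refl | simp)+

lemma Yx_cont: "continuous_on {0..1} (\<lambda>x. Y x t)"
  unfolding Y_def by (intro continuous_intros v_cont Q_cont T_cont)

definition "fd t x = (if t \<le> T x then 1 + v' x * t else J x + (t - T x) * K x)"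

lemma Yx_deriv: assumes x: "x \<in> {0..1}" and tT: "t \<noteq> T x"
  shows "((\<lambda>x. Y x t) has_real_derivative fd t x) (at x within {0..1})"
proof -
  have "\<exists>d>0. \<forall>x'\<in>{0..1}. dist x' x < d \<longrightarrow> dist (T x') (T x) < \<bar>t - T x\<bar>"
    using T_cont x tT unfolding continuous_on_iff by auto
  then obtain d where d: "d > 0" "\<And>x'. x' \<in> {0..1} \<Longrightarrow> dist x' x < d \<Longrightarrow> dist (T x') (T x) < \<bar>t - T x\<bar>"
    by blast
  show ?thesis
  proof (cases "t < T x")
    case True
    show ?thesis
    proof (rule has_field_derivative_transform_within[OF _ d(1) x])
      show "((\<lambda>x. x + v x * t + F1 * t^2 / 2) has_real_derivative fd t x) (at x within {0..1})"
        using P_deriv[OF x] True unfolding fd_def by simp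
      fix x' assume x': "x' \<in> {0..1}" "dist x' x < d"
      have "t < T x'" using d(2)[OF x'] True by (auto simp: dist_real_def)
      then show "x' + v x' * t + F1 * t^2 / 2 = Y x' t" using Y_pre[OF x'(1)] by simp
    qed
  next
    case False
    then have ft: "T x < t" using tT by simp
    show ?thesis
    proof (rule has_field_derivative_transform_within[OF _ d(1) x])
      show "((\<lambda>x. A + w x * (t - T x) + F2 * (t - T x)^2 / 2) has_real_derivative fd t x) (at x within {0..1})"
        using G_deriv[OF x] ft unfolding fd_def by simp
      fix x' assume x': "x' \<in> {0..1}" "dist x' x < d"
      have "T x' < t" using d(2)[OF x'] ft by (auto simp: dist_real_def)
      then show "A + w x' * (t - T x') + F2 * (t - T x')^2 / 2 = Y x' t" using Y_post[OF x'(1)] by simp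
    qed
  qed
qed


lemma cond_iff: assumes x: "x \<in> {0..1}"
  shows "(- 2 * (A - x) * v' x < v x + sqrt ((v x)^2 + 2 * F1 * (A - x))) \<longleftrightarrow> J x > 0"
    and "(v' x * ((F1 - F2) * v x + F2 * sqrt ((v x)^2 + 2 * F1 * (A - x))) \<ge> F1 * (F1 - F2)) \<longleftrightarrow> K x \<ge> 0"
proof -
  note b = basic[OF x]
  have sw: "sqrt ((v x)^2 + 2 * F1 * (A - x)) = w x" unfolding w_def ..
  have vx: "v x \<ge> 0" using vpos x by auto
  have wv: "w x + v x > 0" using b(1) vx by simp
  have TT: "T x = 2 * (A - x) / (w x + v x)"
  proof -
    have "(w x - v x) * (w x + v x) = 2 * F1 * (A - x)" using b(3) by (simp add: algebra_simps power2_eq_square)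
    then show ?thesis unfolding T_def using wv by (simp add: field_simps)
  qed
  have J1: "J x * (w x + v x) = w x + v x + 2 * (A - x) * v' x"
    unfolding J_def TT using wv by (simp add: field_simps)
  have "J x > 0 \<longleftrightarrow> J x * (w x + v x) > 0" using wv by (simp add: zero_less_mult_iff)
  moreover have "(- 2 * (A - x) * v' x < v x + w x) \<longleftrightarrow> (w x + v x + 2 * (A - x) * v' x > 0)"
  proof -
    define c where "c = (A - x) * v' x"
    have "- 2 * (A - x) * v' x = -2 * c" "2 * (A - x) * v' x = 2 * c" unfolding c_def by (simp_all add: algebra_simps)
    then show ?thesis by linarith
  qed
  ultimately show "(- 2 * (A - x) * v' x < v x + sqrt ((v x)^2 + 2 * F1 * (A - x))) \<longleftrightarrow> J x > 0"
    unfolding sw J1 by simp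
  have FJ: "F1 * J x = F1 + v' x * (w x - v x)" unfolding J_def T_def by (simp add: field_simps)
  have K1: "K x * (F1 * w x) = v' x * ((F1 - F2) * v x + F2 * w x) - F1 * (F1 - F2)"
  proof -
    have "K x * (F1 * w x) = F1 * w x * v' x - (F1 - F2) * (F1 * J x)"
      unfolding K_def Tp_def using b(1) by (simp add: field_simps)
    also have "\<dots> = v' x * ((F1 - F2) * v x + F2 * w x) - F1 * (F1 - F2)"
      unfolding FJ by (simp add: algebra_simps)
    finally show ?thesis .
  qed
  have p: "F1 * w x > 0" using b(1) F1 by simp
  have "K x \<ge> 0 \<longleftrightarrow> K x * (F1 * w x) \<ge> 0"
  proof
    assume "K x \<ge> 0" then show "K x * (F1 * w x) \<ge> 0" using p by simp
  next
    assume h: "K x * (F1 * w x) \<ge> 0"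
    show "K x \<ge> 0"
    proof (rule ccontr)
      assume "\<not> K x \<ge> 0"
      then have "K x * (F1 * w x) < 0" using p by (simp add: mult_neg_pos)
      then show False using h by simp
    qed
  qed
  then show "(v' x * ((F1 - F2) * v x + F2 * sqrt ((v x)^2 + 2 * F1 * (A - x))) \<ge> F1 * (F1 - F2)) \<longleftrightarrow> K x \<ge> 0"
    unfolding sw K1 by auto
qed

lemma interior01: "interior {0..1::real} = {0<..<1}" by simp

lemma suff:
  assumes H: "\<forall>x\<in>{0..1}. J x > 0 \<and> K x \<ge> 0" and t: "0 \<le> t"
    and x: "0 \<le> x1" "x1 < x2" "x2 \<le> 1"
  shows "Y x1 t < Y x2 t"
proof -
  have Tdec: "T q < T p" if pq: "0 \<le> p" "p < q" "q \<le> 1" for p q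
  proof -
    have "(\<lambda>x. - T x) p < (\<lambda>x. - T x) q"
    proof (rule incr_lemma[where S="{}" and f'="\<lambda>x. - Tp x", OF _ _ _ _ pq])
      show "continuous_on {0..1} (\<lambda>x. - T x)" by (intro continuous_intros T_cont)
      show "finite {}" by simp
      fix x assume "x \<in> {0<..<1::real} - {}"
      then have xi: "x \<in> interior {0..1}" "x \<in> {0..1}" by auto
      have "(T has_real_derivative Tp x) (at x)"
        using T_deriv[OF xi(2)] unfolding at_within_interior[OF xi(1)] .
      then show "((\<lambda>x. - T x) has_real_derivative - Tp x) (at x)" by (rule DERIV_minus)
    next
      fix x :: real assume x: "x \<in> {0..1}"
      have "J x > 0" using H x by auto
      then show "0 < - Tp x" unfolding Tp_def using basic(1)[OF x] by simp
    qed
    then show ?thesis by simp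
  qed
  define S where "S = {x\<in>{0..1}. T x = t}"
  have finS: "finite S"
  proof (cases "S = {}")
    case False
    then obtain x0 where x0: "x0 \<in> S" by blast
    have "S \<subseteq> {x0}"
    proof
      fix x assume x: "x \<in> S"
      show "x \<in> {x0}"
      proof (rule ccontr)
        assume "x \<notin> {x0}"
        then have "x < x0 \<or> x0 < x" by auto
        then show False using Tdec[of x x0] Tdec[of x0 x] x x0 unfolding S_def by auto
      qed
    qed
    then show ?thesis using finite_subset by blast
  qed simp
  have pos: "0 < fd t x" if x: "x \<in> {0..1}" for x
  proof (cases "t \<le> T x")
    case True
    have J: "J x > 0" using H x by auto
    show ?thesis
    proof (cases "v' x \<ge> 0")
      case True
      then have "0 \<le> v' x * t" using t by simp
      then show ?thesis using \<open>t \<le> T x\<close> unfolding fd_def by simp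
    next
      case False
      then have "v' x * T x \<le> v' x * t" using \<open>t \<le> T x\<close> by (intro mult_left_mono_neg) auto
      then show ?thesis using J \<open>t \<le> T x\<close> unfolding fd_def J_def by simp
    qed
  next
    case False
    have "J x > 0" "K x \<ge> 0" using H x by auto
    moreover have "0 \<le> (t - T x) * K x" using False \<open>K x \<ge> 0\<close> by simp
    ultimately have "0 < J x + (t - T x) * K x" by linarith
    then show ?thesis using False unfolding fd_def by simp
  qed
  show ?thesis
  proof (rule incr_lemma[where f="\<lambda>x. Y x t" and S=S and f'="fd t", OF Yx_cont finS _ pos x])
    fix x assume "x \<in> {0<..<1::real} - S"
    then have xi: "x \<in> interior {0..1}" "x \<in> {0..1}" "T x \<noteq> t" unfolding S_def by auto
    show "((\<lambda>x. Y x t) has_real_derivative fd t x) (at x)"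
      using Yx_deriv[OF xi(2)] xi(3) unfolding at_within_interior[OF xi(1)] by auto
  qed
qed

lemma nec:
  assumes x0: "x0 \<in> {0..1}" and nc: "\<not> (J x0 > 0 \<and> K x0 \<ge> 0)"
  shows "\<exists>\<tau>\<ge>0. \<exists>x\<in>{0..1}. \<exists>x'\<in>{0..1}. x \<noteq> x' \<and> Y x \<tau> = Y x' \<tau>"
proof -
  note b = basic[OF x0]
  obtain s where s: "s > 0" "J x0 + s * K x0 < 0"
  proof (cases "K x0 < 0")
    case True
    define s where "s = \<bar>J x0\<bar> / (- K x0) + 1"
    have "s * K x0 = - \<bar>J x0\<bar> + K x0" unfolding s_def using True by (simp add: field_simps)
    moreover have "s > 0" unfolding s_def using True by (simp add: add_nonneg_pos)
    ultimately show ?thesis using that[of s] True by (simp add: abs_if split: if_splits)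
  next
    case False
    then have K: "K x0 \<ge> 0" by simp
    have J: "J x0 < 0"
    proof (rule ccontr)
      assume "\<not> J x0 < 0"
      then have "J x0 = 0" using nc K by simp
      then have "Tp x0 = 0" "v' x0 * T x0 = -1" unfolding Tp_def J_def by simp_all
      then have k: "K x0 = v' x0" unfolding K_def by simp
      have "v' x0 < 0"
      proof (rule ccontr)
        assume "\<not> v' x0 < 0"
        then have "0 \<le> v' x0 * T x0" using b(4) by simp
        then show False using \<open>v' x0 * T x0 = -1\<close> by simp
      qed
      then show False using K k by simp
    qed
    define s where "s = - J x0 / (2 * K x0 + 1)"
    have d: "2 * K x0 + 1 > 0" using K by simp
    have "(J x0 + s * K x0) * (2 * K x0 + 1) = J x0 * (K x0 + 1)"
      unfolding s_def using d by (simp add: field_simps)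
    moreover have "J x0 * (K x0 + 1) < 0" using J K by (simp add: mult_neg_pos)
    ultimately have "(J x0 + s * K x0) * (2 * K x0 + 1) < 0" by simp
    then have "J x0 + s * K x0 < 0" using d by (simp add: mult_less_0_iff)
    moreover have "s > 0" unfolding s_def using J d by (intro divide_pos_pos) auto
    ultimately show ?thesis using that by blast
  qed
  define t where "t = T x0 + s"
  have t0: "0 \<le> t" unfolding t_def using b(4) s by simp
  show ?thesis
  proof (rule coll_lemma[where Y=Y and t=t, OF t0 _ _ _ Yx_cont x0])
    show "continuous_on {0..t} (\<lambda>\<tau>. Y 1 \<tau> - Y 0 \<tau>)"
      unfolding Y_def by (intro continuous_intros Q_cont) auto
    show "Y 0 0 = 0" using Y_pre[of 0 0] basic(4)[of 0] by simp
    show "Y 1 0 = 1" using Y_pre[of 1 0] basic(4)[of 1] by simp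
    have "t \<noteq> T x0" unfolding t_def using s by simp
    from Yx_deriv[OF x0 this] show "((\<lambda>x. Y x t) has_real_derivative fd t x0) (at x0 within {0..1})" .
    show "fd t x0 < 0" unfolding fd_def t_def using s by simp
  qed
qed

lemma Fo_eq: "Fo = (\<lambda>y. if y < A then F1 else F2)" by (rule ext) (simp add: Fo_def)

theorem main1:
  "no_collisions (\<lambda>y. if y < A then F1 else F2) v \<longleftrightarrow>
     (\<forall>x\<in>{0..1}.
        let D = (v x)\<^sup>2 + 2 * F1 * (A - x) in
        - 2 * (A - x) * v' x < v x + sqrt D \<and>
        v' x * ((F1 - F2) * v x + F2 * sqrt D) \<ge> F1 * (F1 - F2))"
proof -
  have ci: "(let D = (v x)\<^sup>2 + 2 * F1 * (A - x) in
        - 2 * (A - x) * v' x < v x + sqrt D \<and>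
        v' x * ((F1 - F2) * v x + F2 * sqrt D) \<ge> F1 * (F1 - F2)) \<longleftrightarrow> (J x > 0 \<and> K x \<ge> 0)"
    if x: "x \<in> {0..1}" for x
    using cond_iff[OF x] by (simp add: Let_def)
  have "no_collisions Fo v \<longleftrightarrow> (\<forall>x\<in>{0..1}. J x > 0 \<and> K x \<ge> 0)"
  proof
    assume nc: "no_collisions Fo v"
    show "\<forall>x\<in>{0..1}. J x > 0 \<and> K x \<ge> 0"
    proof (rule ccontr)
      assume "\<not> (\<forall>x\<in>{0..1}. J x > 0 \<and> K x \<ge> 0)"
      then obtain x0 where "x0 \<in> {0..1}" "\<not> (J x0 > 0 \<and> K x0 \<ge> 0)" by blast
      from nec[OF this] obtain \<tau> x x' where c: "\<tau> \<ge> 0" "x \<in> {0..1}" "x' \<in> {0..1}" "x \<noteq> x'" "Y x \<tau> = Y x' \<tau>"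
        by blast
      have tr: "\<forall>x\<in>{0..1}. trajectory Fo x (v x) (\<lambda>t. (\<lambda>t x. Y x t) t x)" using traj_Y by simp
      have "\<forall>t\<ge>0. \<forall>x\<in>{0..1}. \<forall>x'\<in>{0..1}. x \<noteq> x' \<longrightarrow> (\<lambda>t x. Y x t) t x \<noteq> (\<lambda>t x. Y x t) t x'"
        using mp[OF spec[OF nc[unfolded no_collisions_def], of "\<lambda>t x. Y x t"] tr] .
      then have "\<forall>t\<ge>0. \<forall>x\<in>{0..1}. \<forall>x'\<in>{0..1}. x \<noteq> x' \<longrightarrow> Y x t \<noteq> Y x' t" by simp
      with c show False by blast
    qed
  next
    assume H: "\<forall>x\<in>{0..1}. J x > 0 \<and> K x \<ge> 0"
    show "no_collisions Fo v"
      unfolding no_collisions_def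
    proof (intro allI impI ballI)
      fix y :: "real \<Rightarrow> real \<Rightarrow> real" and t x x' :: real
      assume tr: "\<forall>x\<in>{0..1}. trajectory Fo x (v x) (\<lambda>t. y t x)"
        and t: "0 \<le> t" and x: "x \<in> {0..1}" and x': "x' \<in> {0..1}" and ne: "x \<noteq> x'"
      have e1: "y t x = Y x t" using traj_unique[OF x _ t] tr x by blast
      have e2: "y t x' = Y x' t" using traj_unique[OF x' _ t] tr x' by blast
      have "Y x t \<noteq> Y x' t"
      proof (cases "x < x'")
        case True then show ?thesis using suff[OF H t, of x x'] x x' by auto
      next
        case False then have "x' < x" using ne by simp
        then show ?thesis using suff[OF H t, of x' x] x x' by auto
      qed
      then show "y t x \<noteq> y t x'" using e1 e2 by simp
    qed
  qed
  then show ?thesis unfolding Fo_eq using ci by simp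
qed

end

lemma main1a:
  fixes F1 F2 A :: real and v :: "real \<Rightarrow> real"
  assumes F1: "F1 > 0" and F2: "F2 \<ge> 0" and A: "A > 1" and v0: "\<forall>x\<in>{0..1}. v x = 0"
  shows "no_collisions (\<lambda>y. if y < A then F1 else F2) v \<longleftrightarrow> F2 \<ge> F1"
proof -
  have vd: "\<forall>x\<in>{0..1}. (v has_real_derivative (\<lambda>x. 0) x) (at x within {0..1})"
  proof
    fix x :: real assume x: "x \<in> {0..1}"
    have "((\<lambda>x. 0) has_real_derivative 0) (at x within {0..1})" by simp
    then show "(v has_real_derivative (\<lambda>x. 0) x) (at x within {0..1})"
      by (rule has_field_derivative_transform_within[where d=1]) (use x v0 in auto)
  qed
  interpret P1 F1 F2 A v "\<lambda>x. 0"
    by unfold_locales (use F1 F2 A vd v0 in auto)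
  have eq: "(\<forall>x\<in>{0..1}.
        let D = (v x)\<^sup>2 + 2 * F1 * (A - x) in
        - 2 * (A - x) * (\<lambda>x. 0) x < v x + sqrt D \<and>
        (\<lambda>x. 0) x * ((F1 - F2) * v x + F2 * sqrt D) \<ge> F1 * (F1 - F2)) \<longleftrightarrow> F2 \<ge> F1"
  proof -
    have "(let D = (v x)\<^sup>2 + 2 * F1 * (A - x) in
        - 2 * (A - x) * (\<lambda>x. 0) x < v x + sqrt D \<and>
        (\<lambda>x. 0) x * ((F1 - F2) * v x + F2 * sqrt D) \<ge> F1 * (F1 - F2)) \<longleftrightarrow> F2 \<ge> F1"
      if x: "x \<in> {0..1}" for x
    proof -
      have "0 < 2 * F1 * (A - x)" using F1 A x by simp
      then have "0 < sqrt (2 * F1 * (A - x))" by simp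
      moreover have "0 \<ge> F1 * (F1 - F2) \<longleftrightarrow> F2 \<ge> F1" using F1 by (simp add: mult_le_0_iff)
      ultimately show ?thesis using v0 x by (simp add: Let_def)
    qed
    moreover have "(0::real) \<in> {0..1}" by simp
    ultimately show ?thesis by blast
  qed
  show ?thesis using main1 eq by simp
qed

locale P2 =
  fixes F1 F2 F3 A B :: real
  assumes F2: "0 < F2" and F12: "F2 < F1" and F23: "F2 < F3" and A: "1 < A" and AB: "A < B"
begin

lemma F1: "F1 > 0" using F2 F12 by simp
lemma F1ne[simp]: "F1 \<noteq> 0" using F1 by simp
lemma F2ne[simp]: "F2 \<noteq> 0" using F2 by simp

definition "w1 x = sqrt (2 * F1 * (A - x))"
definition "T1 x = w1 x / F1"
definition "w2 x = sqrt (2 * F1 * (A - x) + 2 * F2 * (B - A))"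
definition "T2 x = T1 x + (w2 x - w1 x) / F2"
definition "Y x t = x + F1 * t^2 / 2 + (F2 - F1) / 2 * Q (t - T1 x) + (F3 - F2) / 2 * Q (t - T2 x)"
definition "Yd x t = F1 * t + (F2 - F1) * max (t - T1 x) 0 + (F3 - F2) * max (t - T2 x) 0"
definition "Fo z = (if z < A then F1 else if z < B then F2 else F3)"

lemma basic2:
  assumes x: "x \<in> {0..1}"
  shows "w1 x > 0" "(w1 x)^2 = 2 * F1 * (A - x)" "w2 x > w1 x" "(w2 x)^2 = (w1 x)^2 + 2 * F2 * (B - A)"
    "T1 x > 0" "x + F1 * (T1 x)^2 / 2 = A" "F1 * T1 x = w1 x" "T2 x > T1 x"
    "A + w1 x * (T2 x - T1 x) + F2 * (T2 x - T1 x)^2 / 2 = B" "w1 x + F2 * (T2 x - T1 x) = w2 x"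
    "\<And>s. 0 \<le> s \<Longrightarrow> s < T1 x \<Longrightarrow> x + 0 * s + F1 * s^2 / 2 < A"
    "\<And>s. 0 \<le> s \<Longrightarrow> s < T2 x - T1 x \<Longrightarrow> A + w1 x * s + F2 * s^2 / 2 < B"
proof -
  have Ax: "A - x > 0" using x A by auto
  have D1: "2 * F1 * (A - x) > 0" using Ax F1 by simp
  show w1: "w1 x > 0" unfolding w1_def using D1 by simp
  show w12: "(w1 x)^2 = 2 * F1 * (A - x)" unfolding w1_def using D1 by simp
  have D2: "2 * F1 * (A - x) + 2 * F2 * (B - A) > 0" using D1 F2 AB by (simp add: add_pos_pos)
  show w22: "(w2 x)^2 = (w1 x)^2 + 2 * F2 * (B - A)" unfolding w2_def w12 using D2 by simp
  have w2p: "w2 x > 0" unfolding w2_def using D2 by simp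
  have "(w1 x)^2 < (w2 x)^2" using w22 F2 AB by simp
  from power_less_imp_less_base[OF this] show w21: "w2 x > w1 x" using w2p by simp
  show T1: "T1 x > 0" unfolding T1_def using w1 F1 by simp
  show F1T: "F1 * T1 x = w1 x" unfolding T1_def by simp
  show hit1: "x + F1 * (T1 x)^2 / 2 = A"
  proof -
    have "F1 * (T1 x)^2 / 2 = (w1 x)^2 / (2 * F1)" unfolding T1_def by (simp add: field_simps power2_eq_square)
    also have "\<dots> = A - x" unfolding w12 by simp
    finally show ?thesis by linarith
  qed
  have S: "T2 x - T1 x = (w2 x - w1 x) / F2" unfolding T2_def by simp
  have "(w2 x - w1 x) / F2 > 0" using w21 F2 by simp
  then show "T2 x > T1 x" using S by linarith
  show "w1 x + F2 * (T2 x - T1 x) = w2 x" unfolding S by simp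
  show hit2: "A + w1 x * (T2 x - T1 x) + F2 * (T2 x - T1 x)^2 / 2 = B"
  proof -
    have "w1 x * (T2 x - T1 x) + F2 * (T2 x - T1 x)^2 / 2 = ((w2 x)^2 - (w1 x)^2) / (2 * F2)"
      unfolding S by (simp add: field_simps power2_eq_square)
    also have "\<dots> = B - A" unfolding w22 by simp
    finally show ?thesis by simp
  qed
  fix s :: real assume s: "0 \<le> s"
  { assume "s < T1 x"
    then have "s^2 < (T1 x)^2" using s by (intro power_strict_mono) auto
    then have "F1 * s^2 < F1 * (T1 x)^2" using F1 by simp
    then show "x + 0 * s + F1 * s^2 / 2 < A" using hit1 by linarith }
  { assume sl: "s < T2 x - T1 x"
    have "w1 x * s \<le> w1 x * (T2 x - T1 x)" using w1 sl by (intro mult_left_mono) auto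
    moreover have "s^2 < (T2 x - T1 x)^2" using s sl by (intro power_strict_mono) auto
    then have "F2 * s^2 < F2 * (T2 x - T1 x)^2" using F2 by simp
    ultimately show "A + w1 x * s + F2 * s^2 / 2 < B" using hit2 by linarith }
qed

lemma Y_1: "x \<in> {0..1} \<Longrightarrow> t \<le> T1 x \<Longrightarrow> Y x t = x + F1 * t^2 / 2"
  using basic2(8)[of x] unfolding Y_def by (simp add: Q_neg)

lemma Y_2: assumes x: "x \<in> {0..1}" and t: "T1 x \<le> t" "t \<le> T2 x"
  shows "Y x t = A + w1 x * (t - T1 x) + F2 * (t - T1 x)^2 / 2"
proof -
  note b = basic2[OF x]
  have "Y x t = x + F1 * t^2 / 2 + (F2 - F1) / 2 * (t - T1 x)^2"
    unfolding Y_def using t by (simp add: Q_pos Q_neg)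
  also have "\<dots> = (x + F1 * (T1 x)^2 / 2) + (F1 * T1 x) * (t - T1 x) + F2 * (t - T1 x)^2 / 2"
    by (simp add: field_simps power2_eq_square)
  also have "\<dots> = A + w1 x * (t - T1 x) + F2 * (t - T1 x)^2 / 2" using b(6,7) by simp
  finally show ?thesis .
qed

lemma Y_3: assumes x: "x \<in> {0..1}" and t: "T2 x \<le> t"
  shows "Y x t = B + w2 x * (t - T2 x) + F3 * (t - T2 x)^2 / 2"
proof -
  note b = basic2[OF x]
  have t1: "T1 x \<le> t" using b(8) t by simp
  have e1: "Y x t = x + F1 * t^2 / 2 + (F2 - F1) / 2 * (t - T1 x)^2 + (F3 - F2) / 2 * (t - T2 x)^2"
    unfolding Y_def using t t1 by (simp add: Q_pos)
  have e2: "x + F1 * t^2 / 2 + (F2 - F1) / 2 * (t - T1 x)^2 = (x + F1 * (T1 x)^2 / 2) + (F1 * T1 x) * (t - T1 x) + F2 * (t - T1 x)^2 / 2"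
    by (simp add: field_simps power2_eq_square)
  have e3: "A + w1 x * (t - T1 x) + F2 * (t - T1 x)^2 / 2 + (F3 - F2) / 2 * (t - T2 x)^2
      = (A + w1 x * (T2 x - T1 x) + F2 * (T2 x - T1 x)^2 / 2) + (w1 x + F2 * (T2 x - T1 x)) * (t - T2 x)
      + F3 * (t - T2 x)^2 / 2"
    by (simp add: field_simps power2_eq_square)
  show ?thesis unfolding e1 e2 b(6,7) e3 b(9,10) ..
qed

lemma Fo_nonneg: "Fo z \<ge> 0" unfolding Fo_def using F1 F2 F23 by auto

lemma traj_Y: assumes x: "x \<in> {0..1}" shows "trajectory Fo x 0 (Y x)"
proof (rule traj_exist[where Y'="Yd x"])
  note b = basic2[OF x]
  show "\<forall>t\<ge>0. (Y x has_real_derivative Yd x t) (at t)"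
  proof safe
    fix t :: real
    show "(Y x has_real_derivative Yd x t) (at t)"
      unfolding Y_def[abs_def] Yd_def
      by (rule derivative_eq_intros Q_shift_deriv refl | simp)+
  qed
  show "Y x 0 = x" unfolding Y_def using b(5,8) by (simp add: Q_neg)
  show "Yd x 0 = 0" unfolding Yd_def using b(5,8) by simp
  show "\<forall>t\<ge>0. ((\<lambda>s. Fo (Y x s)) has_integral (Yd x t - 0)) {0..t}"
  proof safe
    fix t :: real assume t: "0 \<le> t"
    have i1: "((\<lambda>s. F1) has_integral (F1 * t)) {0..t}"
      using has_integral_const_real[of F1 0 t] t by (simp add: mult.commute)
    have i2: "((\<lambda>s. (F2 - F1) * (if T1 x \<le> s then 1 else 0)) has_integral ((F2 - F1) * max (t - T1 x) 0)) {0..t}"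
      by (rule has_integral_mult_right[OF step_integral]) (use b(5) t in auto)
    have i3: "((\<lambda>s. (F3 - F2) * (if T2 x \<le> s then 1 else 0)) has_integral ((F3 - F2) * max (t - T2 x) 0)) {0..t}"
      by (rule has_integral_mult_right[OF step_integral]) (use b(5,8) t in auto)
    have i4: "((\<lambda>s. F1 + (F2 - F1) * (if T1 x \<le> s then 1 else 0) + (F3 - F2) * (if T2 x \<le> s then 1 else 0))
       has_integral (Yd x t - 0)) {0..t}"
      using has_integral_add[OF has_integral_add[OF i1 i2] i3] unfolding Yd_def by simp
    show "((\<lambda>s. Fo (Y x s)) has_integral (Yd x t - 0)) {0..t}"
    proof (rule has_integral_eq[OF _ i4])
      fix s assume s: "s \<in> {0..t}"
      show "F1 + (F2 - F1) * (if T1 x \<le> s then 1 else 0) + (F3 - F2) * (if T2 x \<le> s then 1 else 0) = Fo (Y x s)"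
      proof (cases "s < T1 x")
        case True
        then have "Y x s < A" using Y_1[OF x, of s] b(11)[of s] s by auto
        then show ?thesis using True b(8) unfolding Fo_def by auto
      next
        case False
        show ?thesis
        proof (cases "s < T2 x")
          case True
          have "0 \<le> w1 x * (s - T1 x)" using b(1) False by simp
          moreover have "0 \<le> F2 * (s - T1 x)^2 / 2" using F2 by simp
          ultimately have "A \<le> Y x s" using Y_2[OF x, of s] False True by simp
          moreover have "Y x s < B" using Y_2[OF x, of s] False True b(12)[of "s - T1 x"] by simp
          ultimately show ?thesis using False True unfolding Fo_def by auto
        next
          case True2: False
          have "0 \<le> w2 x * (s - T2 x)" using b(1,3) True2 by simp
          moreover have "0 \<le> F3 * (s - T2 x)^2 / 2" using F2 F23 by simp
          ultimately have "B \<le> Y x s" using Y_3[OF x, of s] True2 by simp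
          then show ?thesis using False True2 AB unfolding Fo_def by auto
        qed
      qed
    qed
  qed
qed

lemma traj_unique:
  assumes x: "x \<in> {0..1}" and tr: "trajectory Fo x 0 y" and t: "0 \<le> t"
  shows "y t = Y x t"
proof -
  note b = basic2[OF x]
  obtain y' where y0: "y 0 = x" and y'0: "y' 0 = 0"
    and d: "\<forall>t\<ge>0. (y has_real_derivative y' t) (at t within {0..})"
    and i: "\<forall>t\<ge>0. ((\<lambda>s. Fo (y s)) has_integral (y' t - 0)) {0..t}"
    using tr unfolding trajectory_def by blast
  have F0: "\<forall>z. Fo z \<ge> 0" using Fo_nonneg by auto
  have Fc: "\<And>z. x \<le> z \<Longrightarrow> z < A \<Longrightarrow> Fo z = F1" unfolding Fo_def by simp
  have r1: "\<forall>t\<in>{0..0+T1 x}. y' t = 0 + F1 * (t - 0) \<and> y t = x + 0 * (t - 0) + F1 * (t - 0)^2 / 2"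
    and r2: "\<forall>t\<ge>0+T1 x. A \<le> y t"
    using traj_reach[where y=y and y'=y' and F=Fo, OF d i F0 order_refl y0 y'0 order_refl Fc b(5) _ b(11)]
      b(6) by auto
  have yT1: "y (T1 x) = A" "y' (T1 x) = w1 x" using r1 b(5,6,7) by auto
  have Fc2: "\<And>z. A \<le> z \<Longrightarrow> z < B \<Longrightarrow> Fo z = F2" unfolding Fo_def by simp
  have S: "0 < T2 x - T1 x" using b(8) by simp
  have r3: "\<forall>t\<in>{T1 x..T1 x+(T2 x - T1 x)}. y' t = w1 x + F2 * (t - T1 x) \<and> y t = A + w1 x * (t - T1 x) + F2 * (t - T1 x)^2 / 2"
    and r4: "\<forall>t\<ge>T1 x+(T2 x - T1 x). B \<le> y t"
    using traj_reach[where y=y and y'=y' and F=Fo, OF d i F0 _ yT1 _ Fc2 S b(9) b(12)]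
      b(1,5) by auto
  have yT2: "y (T2 x) = B" "y' (T2 x) = w2 x" using r3 b(8,9,10) by auto
  have Fc3: "\<forall>z\<ge>B. Fo z = F3" unfolding Fo_def using AB by simp
  have r5: "\<forall>t\<ge>T2 x. y t = y (T2 x) + y' (T2 x) * (t - T2 x) + F3 * (t - T2 x)^2 / 2"
    using traj_after[where y=y and y'=y' and F=Fo, OF d i _ _ Fc3] b(5,8) r4 by auto
  show ?thesis
  proof (cases "t \<le> T1 x")
    case True
    then show ?thesis using r1 t Y_1[OF x True] by auto
  next
    case False
    show ?thesis
    proof (cases "t \<le> T2 x")
      case True
      then show ?thesis using r3 False Y_2[OF x, of t] by auto
    next
      case False2: False
      then show ?thesis using r5 yT2 Y_3[OF x, of t] by auto
    qed
  qed
qed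

definition "T2p x = - 1 / w1 x + (F1 / w1 x - F1 / w2 x) / F2"
definition "J3 x = (F1 * w1 x - (F1 - F2) * w2 x) / (w1 x * F2)"
definition "K3 x = (F3 * w2 x * (F2 - F1) + F1 * w1 x * (F3 - F2)) / (w1 x * w2 x * F2)"

lemma J3_eq: "x \<in> {0..1} \<Longrightarrow> - w2 x * T2p x = J3 x"
  using basic2(1,3)[of x] unfolding T2p_def J3_def by (simp add: field_simps)

lemma K3_eq: "x \<in> {0..1} \<Longrightarrow> - F1 / w2 x - F3 * T2p x = K3 x"
  using basic2(1,3)[of x] unfolding T2p_def K3_def by (simp add: field_simps)

lemma w1_deriv: assumes x: "x \<in> {0..1}"
  shows "(w1 has_real_derivative (- F1 / w1 x)) (at x within {0..1})"
proof -
  note b = basic2[OF x]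
  have Dpos: "2 * F1 * (A - x) > 0" using x A F1 by simp
  have dD: "((\<lambda>x. 2 * F1 * (A - x)) has_real_derivative (- 2 * F1)) (at x within {0..1})"
    by (rule derivative_eq_intros refl | simp)+
  have "((\<lambda>x. sqrt (2 * F1 * (A - x))) has_real_derivative
          (inverse (sqrt (2 * F1 * (A - x))) / 2) * (- 2 * F1)) (at x within {0..1})"
    by (rule DERIV_chain2[OF DERIV_real_sqrt[OF Dpos] dD])
  then have d: "(w1 has_real_derivative (inverse (w1 x) / 2) * (- 2 * F1)) (at x within {0..1})"
    unfolding w1_def[abs_def] .
  have eq: "(inverse (w1 x) / 2) * (- 2 * F1) = - F1 / w1 x"
    using b(1) by (simp add: field_simps)
  show ?thesis using d unfolding eq .
qed

lemma w2_deriv: assumes x: "x \<in> {0..1}"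
  shows "(w2 has_real_derivative (- F1 / w2 x)) (at x within {0..1})"
proof -
  note b = basic2[OF x]
  have w2p: "w2 x > 0" using b(1,3) by simp
  have Dpos: "2 * F1 * (A - x) + 2 * F2 * (B - A) > 0" using x A F1 F2 AB by (simp add: add_pos_pos)
  have dD: "((\<lambda>x. 2 * F1 * (A - x) + 2 * F2 * (B - A)) has_real_derivative (- 2 * F1)) (at x within {0..1})"
    by (rule derivative_eq_intros refl | simp)+
  have "((\<lambda>x. sqrt (2 * F1 * (A - x) + 2 * F2 * (B - A))) has_real_derivative
          (inverse (sqrt (2 * F1 * (A - x) + 2 * F2 * (B - A))) / 2) * (- 2 * F1)) (at x within {0..1})"
    by (rule DERIV_chain2[OF DERIV_real_sqrt[OF Dpos] dD])
  then have d: "(w2 has_real_derivative (inverse (w2 x) / 2) * (- 2 * F1)) (at x within {0..1})"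
    unfolding w2_def[abs_def] .
  have eq: "(inverse (w2 x) / 2) * (- 2 * F1) = - F1 / w2 x"
    using w2p by (simp add: field_simps)
  show ?thesis using d unfolding eq .
qed

lemma T1_deriv: assumes x: "x \<in> {0..1}"
  shows "(T1 has_real_derivative (- 1 / w1 x)) (at x within {0..1})"
proof -
  have d: "((\<lambda>x. w1 x / F1) has_real_derivative ((- F1 / w1 x) / F1)) (at x within {0..1})"
    by (rule derivative_eq_intros w1_deriv[OF x] refl | simp)+
  have eq: "(- F1 / w1 x) / F1 = - 1 / w1 x" by simp
  show ?thesis using d unfolding eq T1_def[abs_def] .
qed

lemma T2_deriv: assumes x: "x \<in> {0..1}"
  shows "(T2 has_real_derivative T2p x) (at x within {0..1})"
proof -
  have d: "((\<lambda>x. T1 x + (w2 x - w1 x) / F2) has_real_derivative (- 1 / w1 x + (- F1 / w2 x - - F1 / w1 x) / F2)) (at x within {0..1})"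
    by (rule derivative_eq_intros T1_deriv[OF x] w1_deriv[OF x] w2_deriv[OF x] refl | simp)+
  have eq: "- 1 / w1 x + (- F1 / w2 x - - F1 / w1 x) / F2 = T2p x" unfolding T2p_def by simp
  show ?thesis using d unfolding eq T2_def[abs_def] .
qed

lemma T1_cont: "continuous_on {0..1} T1"
proof -
  have "continuous (at x within {0..1}) T1" if "x \<in> {0..1}" for x
    using DERIV_continuous[OF T1_deriv[OF that]] .
  then show ?thesis by (simp add: continuous_on_eq_continuous_within)
qed

lemma T2_cont: "continuous_on {0..1} T2"
proof -
  have "continuous (at x within {0..1}) T2" if "x \<in> {0..1}" for x
    using DERIV_continuous[OF T2_deriv[OF that]] .
  then show ?thesis by (simp add: continuous_on_eq_continuous_within)
qed

lemma G2_deriv: assumes x: "x \<in> {0..1}"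
  shows "((\<lambda>x. A + w1 x * (t - T1 x) + F2 * (t - T1 x)^2 / 2) has_real_derivative
     (1 - (F1 - F2) * (t - T1 x) / w1 x)) (at x within {0..1})"
proof -
  have w: "w1 x > 0" using basic2(1)[OF x] .
  have d: "((\<lambda>x. A + w1 x * (t - T1 x) + F2 * (t - T1 x)^2 / 2) has_real_derivative
     ((- F1 / w1 x) * (t - T1 x) + w1 x * (- (- 1 / w1 x)) + F2 * (t - T1 x) * (- (- 1 / w1 x)))) (at x within {0..1})"
    by (rule derivative_eq_intros w1_deriv[OF x] T1_deriv[OF x] refl | use w in \<open>simp add: field_simps\<close>)+
  have eq: "(- F1 / w1 x) * (t - T1 x) + w1 x * (- (- 1 / w1 x)) + F2 * (t - T1 x) * (- (- 1 / w1 x))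
     = 1 - (F1 - F2) * (t - T1 x) / w1 x"
    using w by (simp add: field_simps)
  show ?thesis using d unfolding eq .
qed

lemma G3_deriv: assumes x: "x \<in> {0..1}"
  shows "((\<lambda>x. B + w2 x * (t - T2 x) + F3 * (t - T2 x)^2 / 2) has_real_derivative
     (J3 x + (t - T2 x) * K3 x)) (at x within {0..1})"
proof -
  have d: "((\<lambda>x. B + w2 x * (t - T2 x) + F3 * (t - T2 x)^2 / 2) has_real_derivative
     ((- F1 / w2 x) * (t - T2 x) + w2 x * (- T2p x) + F3 * (t - T2 x) * (- T2p x))) (at x within {0..1})"
    by (rule derivative_eq_intros w2_deriv[OF x] T2_deriv[OF x] refl | simp)+
  have eq: "(- F1 / w2 x) * (t - T2 x) + w2 x * (- T2p x) + F3 * (t - T2 x) * (- T2p x)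
     = (- w2 x * T2p x) + (t - T2 x) * (- F1 / w2 x - F3 * T2p x)"
    by (simp add: algebra_simps)
  show ?thesis using d unfolding eq J3_eq[OF x] K3_eq[OF x] .
qed

lemma G1_deriv: "((\<lambda>x. x + F1 * t^2 / 2) has_real_derivative 1) (at x within {0..1})"
  by (rule derivative_eq_intros refl | simp)+

lemma Yx_cont: "continuous_on {0..1} (\<lambda>x. Y x t)"
  unfolding Y_def by (intro continuous_intros Q_cont T1_cont T2_cont)

definition "fd t x = (if t \<le> T1 x then 1 else if t \<le> T2 x then 1 - (F1 - F2) * (t - T1 x) / w1 x
   else J3 x + (t - T2 x) * K3 x)"

lemma Yx_deriv: assumes x: "x \<in> {0..1}" and tT: "t \<noteq> T1 x" "t \<noteq> T2 x"
  shows "((\<lambda>x. Y x t) has_real_derivative fd t x) (at x within {0..1})"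
proof -
  have "\<exists>d>0. \<forall>x'\<in>{0..1}. dist x' x < d \<longrightarrow> dist (T1 x') (T1 x) < \<bar>t - T1 x\<bar>"
    using T1_cont x tT unfolding continuous_on_iff by auto
  then obtain d1 where d1: "d1 > 0" "\<And>x'. x' \<in> {0..1} \<Longrightarrow> dist x' x < d1 \<Longrightarrow> dist (T1 x') (T1 x) < \<bar>t - T1 x\<bar>"
    by blast
  have "\<exists>d>0. \<forall>x'\<in>{0..1}. dist x' x < d \<longrightarrow> dist (T2 x') (T2 x) < \<bar>t - T2 x\<bar>"
    using T2_cont x tT unfolding continuous_on_iff by auto
  then obtain d2 where d2: "d2 > 0" "\<And>x'. x' \<in> {0..1} \<Longrightarrow> dist x' x < d2 \<Longrightarrow> dist (T2 x') (T2 x) < \<bar>t - T2 x\<bar>"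
    by blast
  define d where "d = min d1 d2"
  have d: "d > 0" "\<And>x'. dist x' x < d \<Longrightarrow> dist x' x < d1" "\<And>x'. dist x' x < d \<Longrightarrow> dist x' x < d2"
    using d1 d2 unfolding d_def by auto
  have b12: "T1 x < T2 x" using basic2(8)[OF x] .
  show ?thesis
  proof (cases "t < T1 x")
    case True
    show ?thesis
    proof (rule has_field_derivative_transform_within[OF _ d(1) x])
      show "((\<lambda>x. x + F1 * t^2 / 2) has_real_derivative fd t x) (at x within {0..1})"
        using G1_deriv True unfolding fd_def by simp
      fix x' assume x': "x' \<in> {0..1}" "dist x' x < d"
      have "t < T1 x'" using d1(2)[OF x'(1) d(2)[OF x'(2)]] True by (auto simp: dist_real_def)
      then show "x' + F1 * t^2 / 2 = Y x' t" using Y_1[OF x'(1)] by simp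
    qed
  next
    case False
    then have f1: "T1 x < t" using tT by simp
    show ?thesis
    proof (cases "t < T2 x")
      case True
      show ?thesis
      proof (rule has_field_derivative_transform_within[OF _ d(1) x])
        show "((\<lambda>x. A + w1 x * (t - T1 x) + F2 * (t - T1 x)^2 / 2) has_real_derivative fd t x) (at x within {0..1})"
          using G2_deriv[OF x] True f1 unfolding fd_def by simp
        fix x' assume x': "x' \<in> {0..1}" "dist x' x < d"
        have "T1 x' < t" using d1(2)[OF x'(1) d(2)[OF x'(2)]] f1 by (auto simp: dist_real_def)
        moreover have "t < T2 x'" using d2(2)[OF x'(1) d(3)[OF x'(2)]] True by (auto simp: dist_real_def)
        ultimately show "A + w1 x' * (t - T1 x') + F2 * (t - T1 x')^2 / 2 = Y x' t" using Y_2[OF x'(1)] by simp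
      qed
    next
      case False2: False
      then have f2: "T2 x < t" using tT by simp
      show ?thesis
      proof (rule has_field_derivative_transform_within[OF _ d(1) x])
        show "((\<lambda>x. B + w2 x * (t - T2 x) + F3 * (t - T2 x)^2 / 2) has_real_derivative fd t x) (at x within {0..1})"
          using G3_deriv[OF x] f2 f1 unfolding fd_def by simp
        fix x' assume x': "x' \<in> {0..1}" "dist x' x < d"
        have "T2 x' < t" using d2(2)[OF x'(1) d(3)[OF x'(2)]] f2 by (auto simp: dist_real_def)
        then show "B + w2 x' * (t - T2 x') + F3 * (t - T2 x')^2 / 2 = Y x' t" using Y_3[OF x'(1)] by simp
      qed
    qed
  qed
qed

definition "alpha = F1 * (F3 - F1) * (F3 * (F1 - F2) + F1 * (F3 - F2)) / ((F1 - F2)\<^sup>2 * F3\<^sup>2)"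

lemma K3_iff: assumes x: "x \<in> {0..1}"
  shows "K3 x \<ge> 0 \<longleftrightarrow> B - A \<le> alpha * (A - x)"
proof -
  note b = basic2[OF x]
  define a where "a = w1 x"
  define c where "c = w2 x"
  define P where "P = F3 * (F1 - F2)"
  define R where "R = F1 * (F3 - F2)"
  have a: "a > 0" "a^2 = 2 * F1 * (A - x)" unfolding a_def using b(1,2) by auto
  have c: "c > 0" "c^2 = a^2 + 2 * F2 * (B - A)" unfolding a_def c_def using b(1,3,4) by auto
  have P: "P > 0" unfolding P_def using F12 F23 F2 by simp
  have R: "R > 0" unfolding R_def using F1 F23 by simp
  have den: "a * c * F2 > 0" using a c F2 by simp
  have s1: "K3 x \<ge> 0 \<longleftrightarrow> F3 * c * (F2 - F1) + F1 * a * (F3 - F2) \<ge> 0"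
    unfolding K3_def a_def[symmetric] c_def[symmetric] using den by (simp add: zero_le_divide_iff)
  have e1: "F3 * c * (F2 - F1) = - (P * c)" "F1 * a * (F3 - F2) = R * a" unfolding P_def R_def by (simp_all add: algebra_simps)
  have s2: "K3 x \<ge> 0 \<longleftrightarrow> P * c \<le> R * a" unfolding s1 e1 by linarith
  have s3: "P * c \<le> R * a \<longleftrightarrow> (P * c)^2 \<le> (R * a)^2"
    using P R a c by (simp add: abs_le_square_iff[symmetric])
  have e2: "(P * c)^2 = P^2 * a^2 + 2 * F2 * P^2 * (B - A)" "(R * a)^2 = R^2 * a^2"
    unfolding power_mult_distrib c(2) by (simp_all add: algebra_simps)
  have s4: "(P * c)^2 \<le> (R * a)^2 \<longleftrightarrow> 2 * F2 * P^2 * (B - A) \<le> (R^2 - P^2) * (2 * F1 * (A - x))"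
    unfolding e2 a(2)[symmetric] by (simp add: algebra_simps)
  have P2: "P^2 = (F1 - F2)^2 * F3^2" unfolding P_def by (simp add: power_mult_distrib mult.commute)
  have al: "alpha = F1 * (F3 - F1) * (P + R) / P^2" unfolding alpha_def P2 unfolding P_def R_def by simp
  have RP: "R - P = F2 * (F3 - F1)" unfolding P_def R_def by (simp add: algebra_simps)
  have "alpha * (2 * F2 * P^2) = F1 * (F3 - F1) * (P + R) * (2 * F2)" unfolding al using P by simp
  also have "\<dots> = (R - P) * (R + P) * (2 * F1)" unfolding RP by (simp add: algebra_simps)
  also have "\<dots> = (R^2 - P^2) * (2 * F1)" by (simp add: algebra_simps power2_eq_square)
  finally have eal: "alpha * (2 * F2 * P^2) = (R^2 - P^2) * (2 * F1)" .
  have pos: "2 * F2 * P^2 > 0" using F2 P by simp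
  have e: "(alpha * (A - x)) * (2 * F2 * P^2) = (R^2 - P^2) * (2 * F1 * (A - x))"
  proof -
    have "(alpha * (A - x)) * (2 * F2 * P^2) = (alpha * (2 * F2 * P^2)) * (A - x)" by (simp add: ac_simps)
    also have "\<dots> = (R^2 - P^2) * (2 * F1) * (A - x)" by (simp only: eal)
    also have "\<dots> = (R^2 - P^2) * (2 * F1 * (A - x))" by (simp only: ac_simps)
    finally show ?thesis .
  qed
  have "2 * F2 * P^2 * (B - A) \<le> (R^2 - P^2) * (2 * F1 * (A - x)) \<longleftrightarrow>
        (B - A) * (2 * F2 * P^2) \<le> (alpha * (A - x)) * (2 * F2 * P^2)"
    unfolding e by (simp add: mult.commute)
  also have "\<dots> \<longleftrightarrow> B - A \<le> alpha * (A - x)" by (rule mult_le_cancel_right_pos[OF pos])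
  finally show ?thesis using s2 s3 s4 by simp
qed

lemma K3_J3: assumes x: "x \<in> {0..1}" and K: "K3 x \<ge> 0" shows "J3 x > 0"
proof -
  note b = basic2[OF x]
  have a: "w1 x > 0" using b(1) .
  have c: "w2 x > 0" using b(1,3) by simp
  have den: "w1 x * w2 x * F2 > 0" using a c F2 by simp
  have "F3 * w2 x * (F2 - F1) + F1 * w1 x * (F3 - F2) \<ge> 0"
    using K unfolding K3_def using den by (simp add: zero_le_divide_iff)
  then have h: "F3 * ((F1 - F2) * w2 x) \<le> F1 * (F3 - F2) * w1 x" by (simp add: algebra_simps)
  have "F1 * (F3 - F2) * w1 x < F3 * (F1 * w1 x)"
  proof -
    have "F1 * F2 * w1 x > 0" using F1 F2 a by simp
    then show ?thesis by (simp add: algebra_simps)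
  qed
  with h have "F3 * ((F1 - F2) * w2 x) < F3 * (F1 * w1 x)" by linarith
  then have "(F1 - F2) * w2 x < F1 * w1 x" using F2 F23 by simp
  then show ?thesis unfolding J3_def using a F2 by (simp add: divide_pos_pos)
qed

lemma phase2_J3: assumes x: "x \<in> {0..1}"
  shows "1 - (F1 - F2) * (T2 x - T1 x) / w1 x = J3 x"
  unfolding J3_def T2_def using basic2(1)[OF x] by (simp add: field_simps)

lemma T2p_J3: "x \<in> {0..1} \<Longrightarrow> T2p x = - J3 x / w2 x"
  using J3_eq[of x] basic2(1,3)[of x] by (simp add: field_simps)

lemma finite_level:
  assumes dec: "\<And>p q. 0 \<le> p \<Longrightarrow> p < q \<Longrightarrow> q \<le> 1 \<Longrightarrow> g q < g p"
  shows "finite {x\<in>{0..1::real}. g x = (t::real)}"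
proof (cases "{x\<in>{0..1::real}. g x = t} = {}")
  case False
  then obtain x0 where x0: "x0 \<in> {x\<in>{0..1::real}. g x = t}" by blast
  have "{x\<in>{0..1::real}. g x = t} \<subseteq> {x0}"
  proof
    fix x assume x: "x \<in> {x\<in>{0..1::real}. g x = t}"
    show "x \<in> {x0}"
    proof (rule ccontr)
      assume "x \<notin> {x0}"
      then have "x < x0 \<or> x0 < x" by auto
      then show False using dec[of x x0] dec[of x0 x] x x0 by auto
    qed
  qed
  then show ?thesis using finite_subset by blast
next
  case True
  show ?thesis unfolding True by simp
qed

lemma dec_of_deriv:
  assumes c: "continuous_on {0..1} g"
    and d: "\<And>x. x \<in> {0..1} \<Longrightarrow> (g has_real_derivative g' x) (at x within {0..1})"
    and n: "\<And>x. x \<in> {0..1} \<Longrightarrow> g' x < 0"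
    and pq: "0 \<le> p" "p < q" "q \<le> (1::real)"
  shows "g q < g p"
proof -
  have "(\<lambda>x. - g x) p < (\<lambda>x. - g x) q"
  proof (rule incr_lemma[where S="{}" and f'="\<lambda>x. - g' x", OF _ _ _ _ pq])
    show "continuous_on {0..1} (\<lambda>x. - g x)" by (intro continuous_intros c)
    show "finite {}" by simp
    fix x assume "x \<in> {0<..<1::real} - {}"
    then have xi: "x \<in> interior {0..1}" "x \<in> {0..1}" by auto
    have "(g has_real_derivative g' x) (at x)"
      using d[OF xi(2)] unfolding at_within_interior[OF xi(1)] .
    then show "((\<lambda>x. - g x) has_real_derivative - g' x) (at x)" by (rule DERIV_minus)
  next
    fix x :: real assume x: "x \<in> {0..1}"
    show "0 < - g' x" using n[OF x] by simp
  qed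
  then show ?thesis by simp
qed

lemma suff2:
  assumes H: "\<forall>x\<in>{0..1}. K3 x \<ge> 0" and t: "0 \<le> t"
    and x: "0 \<le> x1" "x1 < x2" "x2 \<le> 1"
  shows "Y x1 t < Y x2 t"
proof -
  have J: "J3 x > 0" if "x \<in> {0..1}" for x using K3_J3[OF that] H that by auto
  have T1dec: "T1 q < T1 p" if "0 \<le> p" "p < q" "q \<le> 1" for p q
    by (rule dec_of_deriv[OF T1_cont T1_deriv _ that]) (use basic2(1) in auto)
  have T2dec: "T2 q < T2 p" if "0 \<le> p" "p < q" "q \<le> 1" for p q
  proof (rule dec_of_deriv[OF T2_cont T2_deriv _ that])
    fix x :: real assume x: "x \<in> {0..1}"
    show "T2p x < 0" unfolding T2p_J3[OF x] using J[OF x] basic2(1,3)[OF x] by simp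
  qed
  define S where "S = {x\<in>{0..1::real}. T1 x = t} \<union> {x\<in>{0..1::real}. T2 x = t}"
  have finS: "finite S" unfolding S_def
    using finite_level[of T1 t, OF T1dec] finite_level[of T2 t, OF T2dec] by auto
  have pos: "0 < fd t x" if x: "x \<in> {0..1}" for x
  proof -
    note b = basic2[OF x]
    show ?thesis
    proof (cases "t \<le> T1 x")
      case True then show ?thesis unfolding fd_def by simp
    next
      case False
      show ?thesis
      proof (cases "t \<le> T2 x")
        case True
        have "(F1 - F2) * (t - T1 x) \<le> (F1 - F2) * (T2 x - T1 x)"
          using True F12 by (intro mult_left_mono) auto
        then have "(F1 - F2) * (t - T1 x) / w1 x \<le> (F1 - F2) * (T2 x - T1 x) / w1 x"
          using b(1) by (intro divide_right_mono) auto
        then have "1 - (F1 - F2) * (t - T1 x) / w1 x \<ge> J3 x" using phase2_J3[OF x] by linarith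
        then show ?thesis using J[OF x] False True unfolding fd_def by simp
      next
        case False2: False
        have "0 \<le> (t - T2 x) * K3 x" using False2 H x by simp
        then have "0 < J3 x + (t - T2 x) * K3 x" using J[OF x] by linarith
        then show ?thesis using False False2 unfolding fd_def by simp
      qed
    qed
  qed
  show ?thesis
  proof (rule incr_lemma[where f="\<lambda>x. Y x t" and S=S and f'="fd t", OF Yx_cont finS _ pos x])
    fix x assume "x \<in> {0<..<1::real} - S"
    then have xi: "x \<in> interior {0..1}" "x \<in> {0..1}" "T1 x \<noteq> t" "T2 x \<noteq> t" unfolding S_def by auto
    show "((\<lambda>x. Y x t) has_real_derivative fd t x) (at x)"
      using Yx_deriv[OF xi(2)] xi(3,4) unfolding at_within_interior[OF xi(1)] by auto
  qed
qed

lemma nec2: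
  assumes x0: "x0 \<in> {0..1}" and nc: "K3 x0 < 0"
  shows "\<exists>\<tau>\<ge>0. \<exists>x\<in>{0..1}. \<exists>x'\<in>{0..1}. x \<noteq> x' \<and> Y x \<tau> = Y x' \<tau>"
proof -
  note b = basic2[OF x0]
  define s where "s = \<bar>J3 x0\<bar> / (- K3 x0) + 1"
  have "s * K3 x0 = - \<bar>J3 x0\<bar> + K3 x0" unfolding s_def using nc by (simp add: field_simps)
  moreover have sp: "s > 0" unfolding s_def using nc by (simp add: add_nonneg_pos)
  ultimately have sn: "J3 x0 + s * K3 x0 < 0" using nc by (simp add: abs_if split: if_splits)
  define t where "t = T2 x0 + s"
  have t0: "0 \<le> t" unfolding t_def using b(5,8) sp by simp
  show ?thesis
  proof (rule coll_lemma[where Y=Y and t=t, OF t0 _ _ _ Yx_cont x0])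
    show "continuous_on {0..t} (\<lambda>\<tau>. Y 1 \<tau> - Y 0 \<tau>)"
      unfolding Y_def by (intro continuous_intros Q_cont) auto
    show "Y 0 0 = 0" using Y_1[of 0 0] basic2(5)[of 0] by simp
    show "Y 1 0 = 1" using Y_1[of 1 0] basic2(5)[of 1] by simp
    have "t \<noteq> T1 x0" "t \<noteq> T2 x0" unfolding t_def using sp b(8) by simp_all
    from Yx_deriv[OF x0 this] show "((\<lambda>x. Y x t) has_real_derivative fd t x0) (at x0 within {0..1})" .
    show "fd t x0 < 0" unfolding fd_def t_def using sp sn b(8) by simp
  qed
qed

lemma Fo_eq: "Fo = (\<lambda>y. if y < A then F1 else if y < B then F2 else F3)" by (rule ext) (simp add: Fo_def)

theorem main2:
  fixes v :: "real \<Rightarrow> real"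
  assumes v0: "\<forall>x\<in>{0..1}. v x = 0"
  shows "no_collisions (\<lambda>y. if y < A then F1 else if y < B then F2 else F3) v \<longleftrightarrow> B - A \<le> alpha * (A - 1)"
proof -
  have ci: "(\<forall>x\<in>{0..1}. K3 x \<ge> 0) \<longleftrightarrow> B - A \<le> alpha * (A - 1)"
  proof
    assume "\<forall>x\<in>{0..1}. K3 x \<ge> 0"
    then show "B - A \<le> alpha * (A - 1)" using K3_iff[of 1] by simp
  next
    assume h: "B - A \<le> alpha * (A - 1)"
    then have "alpha > 0" using AB A by (metis diff_gt_0_iff_gt less_le_trans mult_nonpos_nonneg not_less less_imp_le)
    show "\<forall>x\<in>{0..1}. K3 x \<ge> 0"
    proof
      fix x :: real assume x: "x \<in> {0..1}"
      have "alpha * (A - 1) \<le> alpha * (A - x)" using x \<open>alpha > 0\<close> by (intro mult_left_mono) auto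
      then show "K3 x \<ge> 0" using K3_iff[OF x] h by simp
    qed
  qed
  have "no_collisions Fo v \<longleftrightarrow> (\<forall>x\<in>{0..1}. K3 x \<ge> 0)"
  proof
    assume nc: "no_collisions Fo v"
    show "\<forall>x\<in>{0..1}. K3 x \<ge> 0"
    proof (rule ccontr)
      assume "\<not> (\<forall>x\<in>{0..1}. K3 x \<ge> 0)"
      then obtain x0 where "x0 \<in> {0..1}" "K3 x0 < 0" by (auto simp: not_le)
      from nec2[OF this] obtain \<tau> x x' where c: "\<tau> \<ge> 0" "x \<in> {0..1}" "x' \<in> {0..1}" "x \<noteq> x'" "Y x \<tau> = Y x' \<tau>"
        by blast
      have tr: "\<forall>x\<in>{0..1}. trajectory Fo x (v x) (\<lambda>t. (\<lambda>t x. Y x t) t x)" using traj_Y v0 by simp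
      have "\<forall>t\<ge>0. \<forall>x\<in>{0..1}. \<forall>x'\<in>{0..1}. x \<noteq> x' \<longrightarrow> (\<lambda>t x. Y x t) t x \<noteq> (\<lambda>t x. Y x t) t x'"
        using mp[OF spec[OF nc[unfolded no_collisions_def], of "\<lambda>t x. Y x t"] tr] .
      then have "\<forall>t\<ge>0. \<forall>x\<in>{0..1}. \<forall>x'\<in>{0..1}. x \<noteq> x' \<longrightarrow> Y x t \<noteq> Y x' t" by simp
      with c show False by blast
    qed
  next
    assume H: "\<forall>x\<in>{0..1}. K3 x \<ge> 0"
    show "no_collisions Fo v"
      unfolding no_collisions_def
    proof (intro allI impI ballI)
      fix y :: "real \<Rightarrow> real \<Rightarrow> real" and t x x' :: real
      assume tr: "\<forall>x\<in>{0..1}. trajectory Fo x (v x) (\<lambda>t. y t x)"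
        and t: "0 \<le> t" and x: "x \<in> {0..1}" and x': "x' \<in> {0..1}" and ne: "x \<noteq> x'"
      have "trajectory Fo x 0 (\<lambda>t. y t x)" using tr x v0 by auto
      from traj_unique[OF x this t] have e1: "y t x = Y x t" by simp
      have "trajectory Fo x' 0 (\<lambda>t. y t x')" using tr x' v0 by auto
      from traj_unique[OF x' this t] have e2: "y t x' = Y x' t" by simp
      have "Y x t \<noteq> Y x' t"
      proof (cases "x < x'")
        case True then show ?thesis using suff2[OF H t, of x x'] x x' by auto
      next
        case False then have "x' < x" using ne by simp
        then show ?thesis using suff2[OF H t, of x' x] x x' by auto
      qed
      then show "y t x \<noteq> y t x'" using e1 e2 by simp
    qed
  qed
  then show ?thesis unfolding Fo_eq ci .
qed

end



theorem theorem3: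
  shows "(\<forall>(F1::real) (F2::real) (A::real) (v::real \<Rightarrow> real).
            F1 > 0 \<and> F2 \<ge> 0 \<and> A > 1 \<and> (\<forall>x\<in>{0..1}. v x = 0) \<longrightarrow>
            (no_collisions (\<lambda>y. if y < A then F1 else F2) v \<longleftrightarrow> F2 \<ge> F1))
       \<and> (\<forall>(F1::real) (F2::real) (A::real) (v::real \<Rightarrow> real) (v'::real \<Rightarrow> real).
            F1 > 0 \<and> F2 \<ge> 0 \<and> A > 1 \<and>
            (\<forall>x\<in>{0..1}. (v has_real_derivative v' x) (at x within {0..1})) \<and>
            continuous_on {0..1} v' \<and>
            (\<forall>x\<in>{0..1}. v x \<ge> 0) \<longrightarrow>
            (no_collisions (\<lambda>y. if y < A then F1 else F2) v \<longleftrightarrow>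
              (\<forall>x\<in>{0..1}.
                 let D = (v x)\<^sup>2 + 2 * F1 * (A - x) in
                 - 2 * (A - x) * v' x < v x + sqrt D \<and>
                 v' x * ((F1 - F2) * v x + F2 * sqrt D) \<ge> F1 * (F1 - F2))))
       \<and> (\<forall>(F1::real) (F2::real) (F3::real) (A::real) (B::real) (v::real \<Rightarrow> real).
            (\<forall>x\<in>{0..1}. v x = 0) \<and> 0 < F2 \<and> F2 < F1 \<and> F2 < F3 \<and> 1 < A \<and> A < B \<longrightarrow>
            (no_collisions (\<lambda>y. if y < A then F1 else if y < B then F2 else F3) v \<longleftrightarrow>
              B - A \<le> (F1 * (F3 - F1) * (F3 * (F1 - F2) + F1 * (F3 - F2))
                        / ((F1 - F2)\<^sup>2 * F3\<^sup>2)) * (A - 1)))"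
proof (intro conjI allI impI)
  fix F1 F2 A :: real and v :: "real \<Rightarrow> real"
  assume h: "F1 > 0 \<and> F2 \<ge> 0 \<and> A > 1 \<and> (\<forall>x\<in>{0..1}. v x = 0)"
  show "no_collisions (\<lambda>y. if y < A then F1 else F2) v \<longleftrightarrow> F2 \<ge> F1"
    using main1a[of F1 F2 A v] h by blast
next
  fix F1 F2 A :: real and v v' :: "real \<Rightarrow> real"
  assume h: "F1 > 0 \<and> F2 \<ge> 0 \<and> A > 1 \<and>
            (\<forall>x\<in>{0..1}. (v has_real_derivative v' x) (at x within {0..1})) \<and>
            continuous_on {0..1} v' \<and>
            (\<forall>x\<in>{0..1}. v x \<ge> 0)"
  interpret P1 F1 F2 A v v' by unfold_locales (use h in auto)
  show "no_collisions (\<lambda>y. if y < A then F1 else F2) v \<longleftrightarrow>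
              (\<forall>x\<in>{0..1}.
                 let D = (v x)\<^sup>2 + 2 * F1 * (A - x) in
                 - 2 * (A - x) * v' x < v x + sqrt D \<and>
                 v' x * ((F1 - F2) * v x + F2 * sqrt D) \<ge> F1 * (F1 - F2))"
    by (rule main1)
next
  fix F1 F2 F3 A B :: real and v :: "real \<Rightarrow> real"
  assume h: "(\<forall>x\<in>{0..1}. v x = 0) \<and> 0 < F2 \<and> F2 < F1 \<and> F2 < F3 \<and> 1 < A \<and> A < B"
  interpret P2 F1 F2 F3 A B by unfold_locales (use h in auto)
  show "no_collisions (\<lambda>y. if y < A then F1 else if y < B then F2 else F3) v \<longleftrightarrow>
              B - A \<le> (F1 * (F3 - F1) * (F3 * (F1 - F2) + F1 * (F3 - F2))
                        / ((F1 - F2)\<^sup>2 * F3\<^sup>2)) * (A - 1)"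
    using main2[of v] h unfolding alpha_def by blast
qed

end
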